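(* Let $L$ be a finite geometric lattice equipped with a sheaf $F$ and let $f:\widetilde L\to L$ be its Boolean cover. Then for any atom $a\in L$ there is a long exact sequence $$\cdots\to\mathrm{HC}_i(\widetilde{L^a};F)\to\mathrm{HC}_i(\widetilde{L_a};F)\to\mathrm{HC}_i(\widetilde L;F)\to\mathrm{HC}_{i-1}(\widetilde{L^a};F)\to\mathrm{HC}_{i-1}(\widetilde{L_a};F)\to\cdots$$
   Context: A finite lattice $L$ with minimum $\mathbf{0}$ is graded by a rank function $rk$ with $rk(\mathbf{0})=0$; its atoms are the rank-$1$ elements; it is atomic if every element is a join of atoms (the empty join being $\mathbf{0}$); it is geometric if it is graded and atomic and $rk(x\vee y)+rk(x\wedge y)\le rk(x)+rk(y)$ for all $x,y$. A sheaf $F$ on a poset assigns an $R$-module $F(x)$ ($R$ a commutative ring with $1$) to each element and a map $F^y_x:F(y)\to F(x)$ to each $x\le y$, functorially (a contravariant functor). For an atom $a$ of $L$: the deletion $L_a$ is the subposet of elements of $L$ expressible as joins of atoms other than $a$ (a graded atomic lattice whose atoms are the atoms of $L$ other than $a$); the restriction $L^a$ is the interval $\{x\in L:x\ge a\}$ (a graded atomic lattice with minimum $a$ whose atoms are the elements covering $a$). Both carry the restriction of $F$. Boolean cover of a graded atomic lattice $M$ with atoms $A_M$ and sheaf $G$: $\widetilde M$ is the lattice of all subsets of $A_M$ ordered by inclusion, with $f:\widetilde M\to M$ sending $S$ to the join of $S$ in $M$ (with $\varnothing\mapsto$ the minimum of $M$); the induced sheaf, still written $G$, is $G(S)=G(f(S))$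 with structure maps $G^{f(T)}_{f(S)}$. Cellular homology: for the Boolean lattice $B$ of subsets of a finite set $\{a_1,\dots,a_n\}$ with sheaf $G$, $C_k(B;G)=\bigoplus_{|x|=k}G(x)$ with differential $\sum\varepsilon^x_yG^x_y$ over pairs $y\subset x$, $|y|=|x|-1$, where $\varepsilon^x_y=(-1)^{j-1}$ if $x=\{a_{i_1},\dots,a_{i_k}\}$ ($i_1<\cdots<i_k$) and $y=x\setminus\{a_{i_j}\}$; $\mathrm{HC}_*(B;G)$ denotes its homology. *)

theory Defs
  imports Complex_Main
begin

definition lub_in :: "'a::order set \<Rightarrow> 'a set \<Rightarrow> 'a \<Rightarrow> bool" where
  "lub_in M S x \<longleftrightarrow> x \<in> M \<and> (\<forall>s\<in>S. s \<le> x) \<and> (\<forall>y\<in>M. (\<forall>s\<in>S. s \<le> y) \<longrightarrow> x \<le> y)"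

definition glb_in :: "'a::order set \<Rightarrow> 'a set \<Rightarrow> 'a \<Rightarrow> bool" where
  "glb_in M S x \<longleftrightarrow> x \<in> M \<and> (\<forall>s\<in>S. x \<le> s) \<and> (\<forall>y\<in>M. (\<forall>s\<in>S. y \<le> s) \<longrightarrow> y \<le> x)"

text \<open>Join of a set S in the poset M (join of the empty set = minimum of M).\<close>
definition bjoin :: "'a::order set \<Rightarrow> 'a set \<Rightarrow> 'a" where
  "bjoin M S = (THE x. lub_in M S x)"

definition bmeet :: "'a::order set \<Rightarrow> 'a set \<Rightarrow> 'a" where
  "bmeet M S = (THE x. glb_in M S x)"

definition lattice_on :: "'a::order set \<Rightarrow> bool" where
  "lattice_on L \<longleftrightarrow> finite L \<and> L \<noteq> {} \<and>
     (\<forall>x\<in>L. \<forall>y\<in>L. (\<exists>z. lub_in L {x, y} z) \<and> (\<exists>z. glb_in L {x, y} z))"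

definition covers_in :: "'a::order set \<Rightarrow> 'a \<Rightarrow> 'a \<Rightarrow> bool" where
  "covers_in M x y \<longleftrightarrow> x \<in> M \<and> y \<in> M \<and> x < y \<and> \<not> (\<exists>z\<in>M. x < z \<and> z < y)"

definition atoms :: "'a::order set \<Rightarrow> 'a set" where
  "atoms M = {x \<in> M. covers_in M (bjoin M {}) x}"

definition geometric_lattice :: "'a::order set \<Rightarrow> bool" where
  "geometric_lattice L \<longleftrightarrow> lattice_on L \<and>
     (\<exists>rk :: 'a \<Rightarrow> nat.
        rk (bjoin L {}) = 0 \<and>
        (\<forall>x y. covers_in L x y \<longrightarrow> rk y = rk x + 1) \<and>
        (\<forall>x\<in>L. \<forall>y\<in>L. rk (bjoin L {x, y}) + rk (bmeet L {x, y}) \<le> rk x + rk y)) \<and>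
     (\<forall>x\<in>L. \<exists>S\<subseteq>atoms L. lub_in L S x)"

definition deletion :: "'a::order set \<Rightarrow> 'a \<Rightarrow> 'a set" where
  "deletion L a = {x \<in> L. \<exists>S \<subseteq> atoms L - {a}. lub_in L S x}"

definition restriction :: "'a::order set \<Rightarrow> 'a \<Rightarrow> 'a set" where
  "restriction L a = {x \<in> L. a \<le> x}"

section \<open>Sheaves of R-modules (all F(x) submodules of one ambient R-module)\<close>

definition sheaf_on :: "('r::comm_ring_1 \<Rightarrow> 'm::ab_group_add \<Rightarrow> 'm) \<Rightarrow> 'a::order set
    \<Rightarrow> ('a \<Rightarrow> 'm set) \<Rightarrow> ('a \<Rightarrow> 'a \<Rightarrow> 'm \<Rightarrow> 'm) \<Rightarrow> bool" where
  "sheaf_on scale L F Fr \<longleftrightarrow>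
     (\<forall>x\<in>L. 0 \<in> F x \<and> (\<forall>v\<in>F x. \<forall>w\<in>F x. v + w \<in> F x) \<and> (\<forall>c. \<forall>v\<in>F x. scale c v \<in> F x)) \<and>
     (\<forall>x\<in>L. \<forall>y\<in>L. x \<le> y \<longrightarrow>
        (\<forall>v\<in>F y. Fr y x v \<in> F x) \<and>
        (\<forall>v\<in>F y. \<forall>w\<in>F y. Fr y x (v + w) = Fr y x v + Fr y x w) \<and>
        (\<forall>c. \<forall>v\<in>F y. Fr y x (scale c v) = scale c (Fr y x v))) \<and>
     (\<forall>x\<in>L. \<forall>v\<in>F x. Fr x x v = v) \<and>
     (\<forall>x\<in>L. \<forall>y\<in>L. \<forall>z\<in>L. x \<le> y \<and> y \<le> z \<longrightarrow> (\<forall>v\<in>F z. Fr y x (Fr z y v) = Fr z x v))"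

text \<open>Chains of degree k on the Boolean cover of M: functions on subsets of the atoms,
  supported on k-element subsets S, with value in F(join of S).\<close>
definition chains :: "'a::order set \<Rightarrow> ('a \<Rightarrow> 'm::ab_group_add set) \<Rightarrow> int \<Rightarrow> ('a set \<Rightarrow> 'm) set" where
  "chains M F k = {c. (\<forall>S. S \<subseteq> atoms M \<and> int (card S) = k \<longrightarrow> c S \<in> F (bjoin M S)) \<and>
                      (\<forall>S. \<not> (S \<subseteq> atoms M \<and> int (card S) = k) \<longrightarrow> c S = 0)}"

text \<open>Sign: removing b from x = insert b S, b at position j, gives (-1)^(j-1),
  with j - 1 = number of elements of S below b in the labelling num.\<close>
definition sgn_term :: "('a \<Rightarrow> nat) \<Rightarrow> 'a set \<Rightarrow> 'a \<Rightarrow> 'm::ab_group_add \<Rightarrow> 'm" where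
  "sgn_term num S b v = (if even (card {s \<in> S. num s < num b}) then v else - v)"

definition bd :: "'a::order set \<Rightarrow> ('a \<Rightarrow> 'a \<Rightarrow> 'm \<Rightarrow> 'm) \<Rightarrow> ('a \<Rightarrow> nat) \<Rightarrow> int
    \<Rightarrow> ('a set \<Rightarrow> 'm::ab_group_add) \<Rightarrow> ('a set \<Rightarrow> 'm)" where
  "bd M Fr num k c = (\<lambda>S. if S \<subseteq> atoms M \<and> int (card S) = k - 1
      then (\<Sum>b\<in>atoms M - S. sgn_term num S b (Fr (bjoin M (insert b S)) (bjoin M S) (c (insert b S))))
      else 0)"

definition cycles where
  "cycles M F Fr num k = {c \<in> chains M F k. bd M Fr num k c = (\<lambda>S. 0)}"

definition boundaries where
  "boundaries M F Fr num k = bd M Fr num (k + 1) ` chains M F (k + 1)"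

definition HC where
  "HC M F Fr num k = (\<lambda>z. (\<lambda>b. (\<lambda>S. z S + b S)) ` boundaries M F Fr num k) ` cycles M F Fr num k"

text \<open>Module operations on cosets (B = the subgroup of boundaries).\<close>
definition cadd :: "('b \<Rightarrow> 'm::ab_group_add) set \<Rightarrow> ('b \<Rightarrow> 'm) set \<Rightarrow> ('b \<Rightarrow> 'm) set" where
  "cadd X Y = {(\<lambda>S. x S + y S) | x y. x \<in> X \<and> y \<in> Y}"

definition csmul :: "('r \<Rightarrow> 'm::ab_group_add \<Rightarrow> 'm) \<Rightarrow> ('b \<Rightarrow> 'm) set \<Rightarrow> 'r \<Rightarrow> ('b \<Rightarrow> 'm) set \<Rightarrow> ('b \<Rightarrow> 'm) set" where
  "csmul scale B c X = {(\<lambda>S. scale c (x S) + b S) | x b. x \<in> X \<and> b \<in> B}"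

definition hom_lin where
  "hom_lin scale B1 H1 B2 H2 \<phi> \<longleftrightarrow>
     (\<forall>X\<in>H1. \<phi> X \<in> H2) \<and>
     (\<forall>X\<in>H1. \<forall>Y\<in>H1. \<phi> (cadd X Y) = cadd (\<phi> X) (\<phi> Y)) \<and>
     (\<forall>c. \<forall>X\<in>H1. \<phi> (csmul scale B1 c X) = csmul scale B2 c (\<phi> X))"

text \<open>Exactness at H2 of H1 --phi--> H2 --psi--> H3; the zero of H3 is the coset B3.\<close>
definition exact_at where
  "exact_at H1 \<phi> H2 \<psi> B3 \<longleftrightarrow> \<phi> ` H1 = {Y \<in> H2. \<psi> Y = B3}"

end

theory Submission
  imports Defs "HOL-Library.Function_Algebras"
begin

definition smf :: "('r \<Rightarrow> 'm \<Rightarrow> 'm) \<Rightarrow> 'r \<Rightarrow> ('b \<Rightarrow> 'm) \<Rightarrow> ('b \<Rightarrow> 'm)" where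
  "smf scale r x = (\<lambda>S. scale r (x S))"

definition rep :: "'c set \<Rightarrow> 'c" where "rep X = (SOME z. z \<in> X)"

lemma cadd_alt: "cadd X Y = {x + y | x y. x \<in> X \<and> y \<in> Y}"
  by (simp add: cadd_def plus_fun_def)

lemma csmul_alt: "csmul scale B c X = {smf scale c x + b | x b. x \<in> X \<and> b \<in> B}"
  by (simp add: csmul_def plus_fun_def smf_def)

locale cx =
  fixes scale :: "'r::comm_ring_1 \<Rightarrow> 'm::ab_group_add \<Rightarrow> 'm"
    and Ch :: "int \<Rightarrow> ('b \<Rightarrow> 'm) set" and D :: "int \<Rightarrow> ('b \<Rightarrow> 'm) \<Rightarrow> ('b \<Rightarrow> 'm)"
  assumes md: "module scale"
    and ch_zero: "0 \<in> Ch k"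
    and ch_add: "x \<in> Ch k \<Longrightarrow> y \<in> Ch k \<Longrightarrow> x + y \<in> Ch k"
    and ch_neg: "x \<in> Ch k \<Longrightarrow> - x \<in> Ch k"
    and ch_sm: "x \<in> Ch k \<Longrightarrow> smf scale r x \<in> Ch k"
    and D_ch: "x \<in> Ch k \<Longrightarrow> D k x \<in> Ch (k - 1)"
    and D_add: "x \<in> Ch k \<Longrightarrow> y \<in> Ch k \<Longrightarrow> D k (x + y) = D k x + D k y"
    and D_sm: "x \<in> Ch k \<Longrightarrow> D k (smf scale r x) = smf scale r (D k x)"
    and DD: "x \<in> Ch k \<Longrightarrow> D (k - 1) (D k x) = 0"
begin

definition Zs where "Zs k = {x \<in> Ch k. D k x = 0}"
definition Bs where "Bs k = D (k + 1) ` Ch (k + 1)"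
definition cs where "cs k z = (\<lambda>b. z + b) ` Bs k"
definition Hs where "Hs k = cs k ` Zs k"

lemma smf_add: "smf scale r (x + y) = smf scale r x + smf scale r y"
  using module.scale_right_distrib[OF md] by (auto simp: smf_def plus_fun_def)

lemma smf_neg: "smf scale r (- x) = - smf scale r x"
  using module.scale_minus_right[OF md] by (auto simp: smf_def fun_Compl_def)

lemma smf_zero: "smf scale r 0 = 0"
  using module.scale_zero_right[OF md] by (auto simp: smf_def)

lemma ch_diff: "x \<in> Ch k \<Longrightarrow> y \<in> Ch k \<Longrightarrow> x - y \<in> Ch k"
  using ch_add ch_neg by (metis diff_conv_add_uminus)

lemma D_zero: "D k 0 = 0"
  using D_add[OF ch_zero ch_zero, of k] by simp

lemma D_neg: "x \<in> Ch k \<Longrightarrow> D k (- x) = - D k x"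
proof -
  assume x: "x \<in> Ch k"
  have "D k x + D k (- x) = 0" using D_add[OF x ch_neg[OF x]] D_zero by simp
  then show ?thesis by (metis neg_eq_iff_add_eq_0)
qed

lemma D_diff: "x \<in> Ch k \<Longrightarrow> y \<in> Ch k \<Longrightarrow> D k (x - y) = D k x - D k y"
  using D_add[OF _ ch_neg, of x k y] D_neg[of y k] by simp

lemma D_ch': "x \<in> Ch (k + 1) \<Longrightarrow> D (k + 1) x \<in> Ch k"
  using D_ch[of x "k+1"] by simp

lemma DD': "x \<in> Ch (k + 1) \<Longrightarrow> D k (D (k + 1) x) = 0"
  using DD[of x "k+1"] by simp

lemma Bs_Ch: "Bs k \<subseteq> Ch k"
  by (auto simp: Bs_def D_ch')

lemma Bs_Zs: "Bs k \<subseteq> Zs k"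
  by (auto simp: Bs_def Zs_def D_ch' DD')

lemma Zs_Ch: "Zs k \<subseteq> Ch k" by (auto simp: Zs_def)

lemma Bs_zero: "0 \<in> Bs k"
  unfolding Bs_def using D_zero ch_zero by (metis image_eqI)

lemma Bs_add: "x \<in> Bs k \<Longrightarrow> y \<in> Bs k \<Longrightarrow> x + y \<in> Bs k"
  unfolding Bs_def by (auto simp: D_add[symmetric] intro!: imageI ch_add)

lemma Bs_neg: "x \<in> Bs k \<Longrightarrow> - x \<in> Bs k"
  unfolding Bs_def by (auto simp: D_neg[symmetric] intro!: imageI ch_neg)

lemma Bs_diff: "x \<in> Bs k \<Longrightarrow> y \<in> Bs k \<Longrightarrow> x - y \<in> Bs k"
  using Bs_add Bs_neg by (metis diff_conv_add_uminus)

lemma Bs_sm: "x \<in> Bs k \<Longrightarrow> smf scale r x \<in> Bs k"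
  unfolding Bs_def by (auto simp: D_sm[symmetric] intro!: imageI ch_sm)

lemma Zs_zero: "0 \<in> Zs k" by (auto simp: Zs_def ch_zero D_zero)

lemma Zs_add: "x \<in> Zs k \<Longrightarrow> y \<in> Zs k \<Longrightarrow> x + y \<in> Zs k"
  by (auto simp: Zs_def D_add ch_add)

lemma Zs_neg: "x \<in> Zs k \<Longrightarrow> - x \<in> Zs k"
  by (auto simp: Zs_def D_neg ch_neg)

lemma Zs_diff: "x \<in> Zs k \<Longrightarrow> y \<in> Zs k \<Longrightarrow> x - y \<in> Zs k"
  using Zs_add Zs_neg by (metis diff_conv_add_uminus)

lemma Zs_sm: "x \<in> Zs k \<Longrightarrow> smf scale r x \<in> Zs k"
  by (auto simp: Zs_def D_sm ch_sm smf_zero)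

lemma cs_eqI: "x - y \<in> Bs k \<Longrightarrow> cs k x = cs k y"
proof -
  assume a: "x - y \<in> Bs k"
  have 1: "cs k x \<subseteq> cs k y" if "x - y \<in> Bs k" for x y
  proof
    fix u assume "u \<in> cs k x"
    then obtain b where b: "b \<in> Bs k" "u = x + b" by (auto simp: cs_def)
    have "u = y + ((x - y) + b)" using b by simp
    moreover have "(x - y) + b \<in> Bs k" using Bs_add that b by simp
    ultimately show "u \<in> cs k y" unfolding cs_def by (rule image_eqI)
  qed
  have "y - x \<in> Bs k" using Bs_neg[OF a] by simp
  then show ?thesis using 1 a by blast
qed

lemma in_cs: "x \<in> cs k x"
  unfolding cs_def using Bs_zero by (metis add.right_neutral image_eqI)

lemma cs_eqD: "cs k x = cs k y \<Longrightarrow> x - y \<in> Bs k"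
proof -
  assume "cs k x = cs k y"
  then have "x \<in> cs k y" using in_cs by metis
  then obtain b where "b \<in> Bs k" "x = y + b" by (auto simp: cs_def)
  then show ?thesis by simp
qed

lemma cs_eq_iff: "cs k x = cs k y \<longleftrightarrow> x - y \<in> Bs k"
  using cs_eqI cs_eqD by blast

lemma rep_cs: "rep (cs k z) - z \<in> Bs k"
proof -
  have "rep (cs k z) \<in> cs k z" unfolding rep_def using in_cs by (metis someI)
  then obtain b where "b \<in> Bs k" "rep (cs k z) = z + b" by (auto simp: cs_def)
  then show ?thesis by simp
qed

lemma cs_rep: "cs k (rep (cs k z)) = cs k z"
  using rep_cs cs_eqI by blast

lemma rep_cs_Zs: "z \<in> Zs k \<Longrightarrow> rep (cs k z) \<in> Zs k"
proof -
  assume z: "z \<in> Zs k"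
  have "rep (cs k z) - z \<in> Zs k" using rep_cs[of k z] Bs_Zs by blast
  from Zs_add[OF this z] show ?thesis by simp
qed

lemma Hs_rep: "X \<in> Hs k \<Longrightarrow> rep X \<in> Zs k \<and> X = cs k (rep X)"
  by (auto simp: Hs_def rep_cs_Zs cs_rep)

lemma cs_in_Hs: "z \<in> Zs k \<Longrightarrow> cs k z \<in> Hs k"
  by (auto simp: Hs_def)

lemma Bs_cs: "cs k 0 = Bs k"
  by (auto simp: cs_def)

lemma Bs_Hs: "Bs k \<in> Hs k"
  using cs_in_Hs[OF Zs_zero] Bs_cs by simp

lemma cadd_cs: "cadd (cs k x) (cs k y) = cs k (x + y)"
proof -
  have "cadd (cs k x) (cs k y) = {(x + b) + (y + b') | b b'. b \<in> Bs k \<and> b' \<in> Bs k}"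
    by (auto simp: cadd_alt cs_def)
  also have "\<dots> = cs k (x + y)"
  proof (intro set_eqI iffI)
    fix u assume "u \<in> {(x + b) + (y + b') | b b'. b \<in> Bs k \<and> b' \<in> Bs k}"
    then obtain b b' where bb: "b \<in> Bs k" "b' \<in> Bs k" "u = (x + b) + (y + b')" by blast
    then show "u \<in> cs k (x + y)" unfolding cs_def
      by (intro image_eqI[of _ _ "b + b'"]) (auto simp: algebra_simps Bs_add)
  next
    fix u assume "u \<in> cs k (x + y)"
    then obtain b where b: "b \<in> Bs k" "u = x + y + b" by (auto simp: cs_def)
    show "u \<in> {(x + b) + (y + b') | b b'. b \<in> Bs k \<and> b' \<in> Bs k}"
      by (rule CollectI, intro exI[of _ b] exI[of _ 0] conjI) (use b Bs_zero in \<open>auto simp: algebra_simps\<close>)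
  qed
  finally show ?thesis .
qed

lemma csmul_cs: "csmul scale (Bs k) r (cs k x) = cs k (smf scale r x)"
proof -
  have "csmul scale (Bs k) r (cs k x) = {smf scale r (x + b) + b' | b b'. b \<in> Bs k \<and> b' \<in> Bs k}"
    by (auto simp: csmul_alt cs_def)
  also have "\<dots> = cs k (smf scale r x)"
  proof (intro set_eqI iffI)
    fix u assume "u \<in> {smf scale r (x + b) + b' | b b'. b \<in> Bs k \<and> b' \<in> Bs k}"
    then obtain b b' where bb: "b \<in> Bs k" "b' \<in> Bs k" "u = smf scale r (x + b) + b'" by blast
    then show "u \<in> cs k (smf scale r x)" unfolding cs_def
      by (intro image_eqI[of _ _ "smf scale r b + b'"]) (auto simp: algebra_simps Bs_add Bs_sm smf_add)
  next
    fix u assume "u \<in> cs k (smf scale r x)"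
    then obtain b where b: "b \<in> Bs k" "u = smf scale r x + b" by (auto simp: cs_def)
    show "u \<in> {smf scale r (x + b) + b' | b b'. b \<in> Bs k \<and> b' \<in> Bs k}"
      by (rule CollectI, intro exI[of _ 0] exI[of _ b] conjI) (use b Bs_zero in auto)
  qed
  finally show ?thesis .
qed

lemma Hs_cadd: "X \<in> Hs k \<Longrightarrow> Y \<in> Hs k \<Longrightarrow> cadd X Y \<in> Hs k"
  by (auto simp: Hs_def cadd_cs Zs_add)

lemma Hs_csmul: "X \<in> Hs k \<Longrightarrow> csmul scale (Bs k) r X \<in> Hs k"
  by (auto simp: Hs_def csmul_cs Zs_Ch Zs_sm subsetD)

end

definition hmap :: "('c \<Rightarrow> 'c set) \<Rightarrow> ('c \<Rightarrow> 'c) \<Rightarrow> 'c set \<Rightarrow> 'c set" where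
  "hmap csf g X = csf (g (rep X))"

lemma hmap_lin:
  assumes c1: "cx scale Ch1 D1" and c2: "cx scale Ch2 D2"
    and gZ: "\<And>x. x \<in> cx.Zs Ch1 D1 k \<Longrightarrow> g x \<in> cx.Zs Ch2 D2 k'"
    and gadd: "\<And>x y. x \<in> cx.Zs Ch1 D1 k \<Longrightarrow> y \<in> cx.Zs Ch1 D1 k \<Longrightarrow> g (x + y) = g x + g y"
    and gsm: "\<And>x r. x \<in> cx.Zs Ch1 D1 k \<Longrightarrow> g (smf scale r x) = smf scale r (g x)"
    and gB: "\<And>x. x \<in> cx.Bs Ch1 D1 k \<Longrightarrow> g x \<in> cx.Bs Ch2 D2 k'"
  shows "\<And>z. z \<in> cx.Zs Ch1 D1 k \<Longrightarrow> hmap (cx.cs Ch2 D2 k') g (cx.cs Ch1 D1 k z) = cx.cs Ch2 D2 k' (g z)"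
    and "hom_lin scale (cx.Bs Ch1 D1 k) (cx.Hs Ch1 D1 k) (cx.Bs Ch2 D2 k') (cx.Hs Ch2 D2 k')
           (hmap (cx.cs Ch2 D2 k') g)"
proof -
  interpret A: cx scale Ch1 D1 by (rule c1)
  interpret B: cx scale Ch2 D2 by (rule c2)
  show ev: "hmap (B.cs k') g (A.cs k z) = B.cs k' (g z)" if z: "z \<in> A.Zs k" for z
  proof -
    have r: "rep (A.cs k z) \<in> A.Zs k" using A.rep_cs_Zs z by blast
    have d: "rep (A.cs k z) - z \<in> A.Bs k" by (rule A.rep_cs)
    have "g (rep (A.cs k z)) = g z + g (rep (A.cs k z) - z)"
      using gadd[OF z, of "rep (A.cs k z) - z"] d A.Bs_Zs by auto
    then have "g (rep (A.cs k z)) - g z \<in> B.Bs k'" using gB[OF d] by simp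
    then show ?thesis unfolding hmap_def using B.cs_eqI by blast
  qed
  show "hom_lin scale (A.Bs k) (A.Hs k) (B.Bs k') (B.Hs k') (hmap (B.cs k') g)"
    unfolding hom_lin_def
  proof (intro conjI ballI allI)
    fix X assume "X \<in> A.Hs k"
    then obtain z where z: "z \<in> A.Zs k" "X = A.cs k z" by (auto simp: A.Hs_def)
    then show "hmap (B.cs k') g X \<in> B.Hs k'" using ev gZ B.cs_in_Hs by simp
  next
    fix X Y assume "X \<in> A.Hs k" "Y \<in> A.Hs k"
    then obtain z w where z: "z \<in> A.Zs k" "X = A.cs k z" "w \<in> A.Zs k" "Y = A.cs k w"
      by (auto simp: A.Hs_def)
    then show "hmap (B.cs k') g (cadd X Y) = cadd (hmap (B.cs k') g X) (hmap (B.cs k') g Y)"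
      using ev A.cadd_cs B.cadd_cs A.Zs_add gadd by simp
  next
    fix c X assume "X \<in> A.Hs k"
    then obtain z where z: "z \<in> A.Zs k" "X = A.cs k z" by (auto simp: A.Hs_def)
    then show "hmap (B.cs k') g (csmul scale (A.Bs k) c X) = csmul scale (B.Bs k') c (hmap (B.cs k') g X)"
      using ev A.csmul_cs B.csmul_cs A.Zs_sm gsm A.Zs_Ch gZ B.Zs_Ch by (simp add: subsetD)
  qed
qed

locale ses =
  A: cx scale CA DA + B: cx scale CB DB + C: cx scale CC DC
  for scale :: "'r::comm_ring_1 \<Rightarrow> 'm::ab_group_add \<Rightarrow> 'm"
    and CA :: "int \<Rightarrow> ('b \<Rightarrow> 'm) set" and DA
    and CB :: "int \<Rightarrow> ('b \<Rightarrow> 'm) set" and DB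
    and CC :: "int \<Rightarrow> ('b \<Rightarrow> 'm) set" and DC +
  fixes p q :: "('b \<Rightarrow> 'm) \<Rightarrow> ('b \<Rightarrow> 'm)"
  assumes A_sub: "CA k \<subseteq> CB k"
    and DA_eq: "x \<in> CA k \<Longrightarrow> DA k x = DB k x"
    and p_ch: "x \<in> CB k \<Longrightarrow> p x \<in> CC (k - 1)"
    and q_ch: "w \<in> CC k \<Longrightarrow> q w \<in> CB (k + 1)"
    and pq: "w \<in> CC k \<Longrightarrow> p (q w) = w"
    and p_add: "p (x + y) = p x + p y"
    and q_add: "q (x + y) = q x + q y"
    and p_sm: "p (smf scale r x) = smf scale r (p x)"
    and q_sm: "q (smf scale r x) = smf scale r (q x)"
    and p_D: "x \<in> CB k \<Longrightarrow> p (DB k x) = DC (k - 1) (p x)"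
    and ker: "x \<in> CB k \<Longrightarrow> p x = 0 \<longleftrightarrow> x \<in> CA k"
begin

lemma p_zero: "p 0 = 0" using p_add[of 0 0] by simp
lemma p_diff: "p (x - y) = p x - p y"
  using p_add[of "x - y" y] by (simp add: algebra_simps)
lemma q_zero: "q 0 = 0" using q_add[of 0 0] by simp
lemma q_diff: "q (x - y) = q x - q y"
  using q_add[of "x - y" y] by (simp add: algebra_simps)

lemma p_ch': "x \<in> CB (k + 1) \<Longrightarrow> p x \<in> CC k"
  using p_ch[of x "k+1"] by simp
lemma p_D': "x \<in> CB (k + 1) \<Longrightarrow> p (DB (k + 1) x) = DC k (p x)"
  using p_D[of x "k+1"] by simp

lemma qp_A: "x \<in> CB (k + 1) \<Longrightarrow> q (p x) - x \<in> CA (k + 1)"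
proof -
  assume x: "x \<in> CB (k + 1)"
  have "q (p x) \<in> CB (k + 1)" using q_ch p_ch' x by blast
  then have "q (p x) - x \<in> CB (k + 1)" using B.ch_diff x by blast
  moreover have "p (q (p x) - x) = 0" using pq[OF p_ch'[OF x]] by (simp add: p_diff)
  ultimately show ?thesis using ker by blast
qed

lemma ZA_ZB: "x \<in> A.Zs k \<Longrightarrow> x \<in> B.Zs k"
  using A_sub DA_eq by (auto simp: A.Zs_def B.Zs_def)

lemma BA_BB: "x \<in> A.Bs k \<Longrightarrow> x \<in> B.Bs k"
  using A_sub DA_eq by (auto simp: A.Bs_def B.Bs_def)

definition iH where "iH k = hmap (B.cs k) id"
definition pH where "pH k = hmap (C.cs (k - 1)) p"
definition dH where "dH k = hmap (A.cs k) (\<lambda>w. DB (k + 1) (q w))"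

lemma dZ: "w \<in> C.Zs k \<Longrightarrow> DB (k + 1) (q w) \<in> A.Zs k"
proof -
  assume w: "w \<in> C.Zs k"
  have qw: "q w \<in> CB (k + 1)" using q_ch w C.Zs_Ch by blast
  have 1: "DB (k + 1) (q w) \<in> CB k" using B.D_ch' qw by blast
  have "p (DB (k + 1) (q w)) = 0" using p_D' qw pq w C.Zs_Ch by (auto simp: C.Zs_def)
  then have 2: "DB (k + 1) (q w) \<in> CA k" using ker 1 by blast
  have "DA k (DB (k + 1) (q w)) = 0" using DA_eq 2 B.DD' qw by simp
  then show ?thesis using 2 by (simp add: A.Zs_def)
qed

lemma iH_lin: "hom_lin scale (A.Bs k) (A.Hs k) (B.Bs k) (B.Hs k) (iH k)"
  and iH_ev: "z \<in> A.Zs k \<Longrightarrow> iH k (A.cs k z) = B.cs k z"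
  using hmap_lin[OF A.cx_axioms B.cx_axioms, of k id k] ZA_ZB BA_BB
  by (auto simp: iH_def)

lemma pZ: "x \<in> B.Zs k \<Longrightarrow> p x \<in> C.Zs (k - 1)"
  by (auto simp: B.Zs_def C.Zs_def p_ch p_D[symmetric] p_zero)

lemma pB: "x \<in> B.Bs k \<Longrightarrow> p x \<in> C.Bs (k - 1)"
proof -
  assume "x \<in> B.Bs k"
  then obtain y where y: "y \<in> CB (k + 1)" "x = DB (k + 1) y" by (auto simp: B.Bs_def)
  then have "p x = DC k (p y)" using p_D' by simp
  moreover have "p y \<in> CC (k - 1 + 1)" using p_ch' y by simp
  ultimately show ?thesis unfolding C.Bs_def by simp
qed

lemma pH_lin: "hom_lin scale (B.Bs k) (B.Hs k) (C.Bs (k - 1)) (C.Hs (k - 1)) (pH k)"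
  and pH_ev: "z \<in> B.Zs k \<Longrightarrow> pH k (B.cs k z) = C.cs (k - 1) (p z)"
  using hmap_lin[OF B.cx_axioms C.cx_axioms, of k p "k - 1"] pZ pB p_add p_sm
  by (auto simp: pH_def)

lemma dB: "w \<in> C.Bs k \<Longrightarrow> DB (k + 1) (q w) \<in> A.Bs k"
proof -
  assume "w \<in> C.Bs k"
  then obtain u where u: "u \<in> CC (k + 1)" "w = DC (k + 1) u" by (auto simp: C.Bs_def)
  have w: "w \<in> CC k" using u C.D_ch' by blast
  have qu: "q u \<in> CB (k + 1 + 1)" using q_ch u by blast
  have dqu: "DB (k + 1 + 1) (q u) \<in> CB (k + 1)" using B.D_ch' qu by blast
  define e where "e = q w - DB (k + 1 + 1) (q u)"
  have eB: "e \<in> CB (k + 1)" unfolding e_def using q_ch w dqu B.ch_diff by blast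
  have "p e = w - DC (k + 1) (p (q u))" unfolding e_def p_diff using pq w p_D'[OF qu] by simp
  also have "\<dots> = 0" using pq u by simp
  finally have eA: "e \<in> CA (k + 1)" using ker eB by blast
  have "DB (k + 1) (q w) = DB (k + 1) (e + DB (k + 1 + 1) (q u))" by (simp add: e_def)
  also have "\<dots> = DB (k + 1) e" using B.D_add[OF eB dqu] B.DD'[OF qu] by simp
  also have "\<dots> = DA (k + 1) e" using DA_eq eA by simp
  finally show ?thesis using eA unfolding A.Bs_def by blast
qed

lemma dH_lin: "hom_lin scale (C.Bs k) (C.Hs k) (A.Bs k) (A.Hs k) (dH k)"
  and dH_ev: "w \<in> C.Zs k \<Longrightarrow> dH k (C.cs k w) = A.cs k (DB (k + 1) (q w))"
proof -
  have gadd: "DB (k + 1) (q (x + y)) = DB (k + 1) (q x) + DB (k + 1) (q y)"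
    if "x \<in> C.Zs k" "y \<in> C.Zs k" for x y
    using that q_add B.D_add q_ch C.Zs_Ch by (metis subsetD)
  have gsm: "DB (k + 1) (q (smf scale r x)) = smf scale r (DB (k + 1) (q x))"
    if "x \<in> C.Zs k" for x r
    using that q_sm B.D_sm q_ch C.Zs_Ch by (metis subsetD)
  show "hom_lin scale (C.Bs k) (C.Hs k) (A.Bs k) (A.Hs k) (dH k)"
    "w \<in> C.Zs k \<Longrightarrow> dH k (C.cs k w) = A.cs k (DB (k + 1) (q w))"
    using hmap_lin[OF C.cx_axioms A.cx_axioms, of k "\<lambda>w. DB (k + 1) (q w)" k] dZ dB gadd gsm
    by (auto simp: dH_def)
qed

lemma exact_A: "dH k ` C.Hs k = {Y \<in> A.Hs k. iH k Y = B.Bs k}"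
proof (intro set_eqI iffI)
  fix Y assume "Y \<in> dH k ` C.Hs k"
  then obtain w where w: "w \<in> C.Zs k" "Y = dH k (C.cs k w)" by (auto simp: C.Hs_def)
  let ?z = "DB (k + 1) (q w)"
  have Y: "Y = A.cs k ?z" using w dH_ev by simp
  have z: "?z \<in> A.Zs k" using dZ w by blast
  have zB: "?z \<in> B.Bs k" unfolding B.Bs_def using q_ch w C.Zs_Ch by blast
  have "iH k Y = B.cs k ?z" using iH_ev z Y by simp
  also have "\<dots> = B.cs k 0" using B.cs_eqI zB by simp
  finally show "Y \<in> {Y \<in> A.Hs k. iH k Y = B.Bs k}" using Y z A.cs_in_Hs B.Bs_cs by auto
next
  fix Y assume "Y \<in> {Y \<in> A.Hs k. iH k Y = B.Bs k}"
  then obtain z where z: "z \<in> A.Zs k" "Y = A.cs k z" "iH k Y = B.Bs k" by (auto simp: A.Hs_def)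
  then have "B.cs k z = B.cs k 0" using iH_ev B.Bs_cs by simp
  then have "z - 0 \<in> B.Bs k" by (rule B.cs_eqD)
  then have "z \<in> B.Bs k" by simp
  then obtain c where c: "c \<in> CB (k + 1)" "z = DB (k + 1) c" by (auto simp: B.Bs_def)
  have zA: "z \<in> CA k" using z A.Zs_Ch by blast
  have "p z = 0" using ker[of z k] zA A_sub by auto
  then have pc: "p c \<in> C.Zs k" using p_ch'[OF c(1)] p_D'[OF c(1)] c(2)
    by (auto simp: C.Zs_def)
  have e: "q (p c) - c \<in> CA (k + 1)" using qp_A c by blast
  have qpc: "q (p c) \<in> CB (k + 1)" using q_ch p_ch' c by blast
  have "DB (k + 1) (q (p c)) - z = DB (k + 1) (q (p c) - c)" using B.D_diff qpc c by simp
  also have "\<dots> = DA (k + 1) (q (p c) - c)" using DA_eq e by simp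
  finally have "DB (k + 1) (q (p c)) - z \<in> A.Bs k" unfolding A.Bs_def using e by blast
  then have "dH k (C.cs k (p c)) = Y" using dH_ev pc z A.cs_eqI by simp
  then show "Y \<in> dH k ` C.Hs k" using pc C.cs_in_Hs by blast
qed

lemma exact_B: "iH k ` A.Hs k = {Y \<in> B.Hs k. pH k Y = C.Bs (k - 1)}"
proof (intro set_eqI iffI)
  fix Y assume "Y \<in> iH k ` A.Hs k"
  then obtain z where z: "z \<in> A.Zs k" "Y = iH k (A.cs k z)" by (auto simp: A.Hs_def)
  have Y: "Y = B.cs k z" using z iH_ev by simp
  have zB: "z \<in> B.Zs k" using ZA_ZB z by blast
  have "p z = 0" using ker[of z k] z A.Zs_Ch A_sub by auto
  then have "pH k Y = C.Bs (k - 1)" using pH_ev zB Y C.Bs_cs by simp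
  then show "Y \<in> {Y \<in> B.Hs k. pH k Y = C.Bs (k - 1)}" using Y zB B.cs_in_Hs by simp
next
  fix Y assume "Y \<in> {Y \<in> B.Hs k. pH k Y = C.Bs (k - 1)}"
  then obtain z where z: "z \<in> B.Zs k" "Y = B.cs k z" "pH k Y = C.Bs (k - 1)" by (auto simp: B.Hs_def)
  then have "C.cs (k - 1) (p z) = C.cs (k - 1) 0" using pH_ev C.Bs_cs by simp
  then have "p z - 0 \<in> C.Bs (k - 1)" by (rule C.cs_eqD)
  then have "p z \<in> C.Bs (k - 1)" by simp
  then obtain w where w: "w \<in> CC k" "p z = DC k w" by (auto simp: C.Bs_def)
  have qw: "q w \<in> CB (k + 1)" using q_ch w by blast
  have dq: "DB (k + 1) (q w) \<in> CB k" using B.D_ch' qw by blast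
  have zC: "z \<in> CB k" using z B.Zs_Ch by blast
  define z' where "z' = z - DB (k + 1) (q w)"
  have z'B: "z' \<in> CB k" unfolding z'_def using zC dq B.ch_diff by blast
  have "p z' = p z - DC (k + 1 - 1) (p (q w))" unfolding z'_def p_diff using p_D[OF qw] by simp
  also have "\<dots> = 0" using w pq by simp
  finally have z'A: "z' \<in> CA k" using ker z'B by blast
  have "DA k z' = DB k z - DB k (DB (k + 1) (q w))" using DA_eq z'A B.D_diff zC dq by (simp add: z'_def)
  also have "\<dots> = 0" using z B.DD'[OF qw] by (simp add: B.Zs_def)
  finally have z'Z: "z' \<in> A.Zs k" using z'A by (simp add: A.Zs_def)
  have "iH k (A.cs k z') = B.cs k z'" using iH_ev z'Z by blast
  also have "\<dots> = Y"
  proof -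
    have "z' - z = DB (k + 1) (- q w)" using B.D_neg[OF qw] by (simp add: z'_def)
    then have "z' - z \<in> B.Bs k" unfolding B.Bs_def using B.ch_neg[OF qw] by blast
    then show ?thesis using z B.cs_eqI by simp
  qed
  finally show "Y \<in> iH k ` A.Hs k" using z'Z A.cs_in_Hs by blast
qed

lemma exact_C: "pH (k + 1) ` B.Hs (k + 1) = {Y \<in> C.Hs k. dH k Y = A.Bs k}"
proof (intro set_eqI iffI)
  fix Y assume "Y \<in> pH (k + 1) ` B.Hs (k + 1)"
  then obtain z where z: "z \<in> B.Zs (k + 1)" "Y = pH (k + 1) (B.cs (k + 1) z)" by (auto simp: B.Hs_def)
  have Y: "Y = C.cs k (p z)" using z pH_ev by simp
  have pz: "p z \<in> C.Zs k" using pZ[OF z(1)] by simp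
  have zC: "z \<in> CB (k + 1)" using z B.Zs_Ch by blast
  have e: "q (p z) - z \<in> CA (k + 1)" using qp_A zC by blast
  have qpz: "q (p z) \<in> CB (k + 1)" using q_ch pz C.Zs_Ch by blast
  have "DB (k + 1) (q (p z)) = DB (k + 1) (q (p z) - z) + DB (k + 1) z"
    using B.D_diff[OF qpz zC] by simp
  also have "\<dots> = DA (k + 1) (q (p z) - z)" using z DA_eq e by (simp add: B.Zs_def)
  finally have "DB (k + 1) (q (p z)) \<in> A.Bs k" unfolding A.Bs_def using e by blast
  then have "dH k Y = A.Bs k" using dH_ev pz Y A.cs_eqI[of _ 0] A.Bs_cs by simp
  then show "Y \<in> {Y \<in> C.Hs k. dH k Y = A.Bs k}" using Y pz C.cs_in_Hs by simp
next
  fix Y assume "Y \<in> {Y \<in> C.Hs k. dH k Y = A.Bs k}"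
  then obtain w where w: "w \<in> C.Zs k" "Y = C.cs k w" "dH k Y = A.Bs k" by (auto simp: C.Hs_def)
  then have "A.cs k (DB (k + 1) (q w)) = A.cs k 0" using dH_ev A.Bs_cs by simp
  then have "DB (k + 1) (q w) - 0 \<in> A.Bs k" by (rule A.cs_eqD)
  then have "DB (k + 1) (q w) \<in> A.Bs k" by simp
  then obtain e where e: "e \<in> CA (k + 1)" "DB (k + 1) (q w) = DA (k + 1) e" by (auto simp: A.Bs_def)
  have qw: "q w \<in> CB (k + 1)" using q_ch w C.Zs_Ch by blast
  have eB: "e \<in> CB (k + 1)" using e A_sub by blast
  define z where "z = q w - e"
  have zC: "z \<in> CB (k + 1)" unfolding z_def using qw eB B.ch_diff by blast
  have "DB (k + 1) z = 0" unfolding z_def using B.D_diff[OF qw eB] e DA_eq by simp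
  then have zZ: "z \<in> B.Zs (k + 1)" using zC by (simp add: B.Zs_def)
  have "p e = 0" using ker[of e] eB e by auto
  moreover have "p (q w) = w" using pq w(1) C.Zs_Ch by blast
  ultimately have "p z = w" unfolding z_def p_diff by simp
  then have "pH (k + 1) (B.cs (k + 1) z) = Y" using pH_ev[OF zZ] w by simp
  then show "Y \<in> pH (k + 1) ` B.Hs (k + 1)" using zZ B.cs_in_Hs by blast
qed

end

definition sg :: "nat \<Rightarrow> 'm::ab_group_add \<Rightarrow> 'm" where
  "sg n v = (if even n then v else - v)"

definition cnt :: "('a \<Rightarrow> nat) \<Rightarrow> 'a set \<Rightarrow> 'a \<Rightarrow> nat" where
  "cnt num S b = card {s \<in> S. num s < num b}"

lemma sgn_term_sg: "sgn_term num S b v = sg (cnt num S b) v"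
  by (simp add: sgn_term_def sg_def cnt_def)

lemma sg_add_v: "sg n (u + v) = sg n u + sg n v" by (simp add: sg_def)
lemma sg_neg_v: "sg n (- v) = - sg n v" by (simp add: sg_def)
lemma sg_zero_v: "sg n 0 = 0" by (simp add: sg_def)
lemma sg_Suc: "sg (Suc n) v = - sg n v" by (simp add: sg_def)
lemma sg_plus: "sg (m + n) v = sg m (sg n v)" by (simp add: sg_def)
lemma sg_sg: "sg n (sg n v) = v" by (simp add: sg_def)
lemma sg_sum: "sg n (sum f A) = (\<Sum>x\<in>A. sg n (f x))"
  by (simp add: sg_def sum_negf)

lemma cnt_insert: "finite S \<Longrightarrow> b' \<notin> S \<Longrightarrow>
   cnt num (insert b' S) b = cnt num S b + (if num b' < num b then 1 else 0)"
proof -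
  assume f: "finite S" and n: "b' \<notin> S"
  show ?thesis
  proof (cases "num b' < num b")
    case True
    then have "{s \<in> insert b' S. num s < num b} = insert b' {s \<in> S. num s < num b}" by auto
    then show ?thesis using True f n by (simp add: cnt_def)
  next
    case False
    then have "{s \<in> insert b' S. num s < num b} = {s \<in> S. num s < num b}" by auto
    then show ?thesis using False by (simp add: cnt_def)
  qed
qed

lemma antisym_sum:
  fixes G :: "'a \<Rightarrow> 'a \<Rightarrow> 'm::ab_group_add"
  assumes "finite A" "\<forall>b\<in>A. \<forall>b'\<in>A. b \<noteq> b' \<longrightarrow> G b b' = - G b' b"
  shows "(\<Sum>b\<in>A. \<Sum>b'\<in>A - {b}. G b b') = 0"
  using assms
proof (induction A rule: finite_induct)
  case empty then show ?case by simp
next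
  case (insert x A)
  have "\<forall>b\<in>A. \<forall>b'\<in>A. b \<noteq> b' \<longrightarrow> G b b' = - G b' b" using insert.prems by blast
  then have IH: "(\<Sum>b\<in>A. \<Sum>b'\<in>A - {b}. G b b') = 0" by (rule insert.IH)
  have 1: "(\<Sum>b\<in>insert x A. \<Sum>b'\<in>insert x A - {b}. G b b')
      = (\<Sum>b'\<in>insert x A - {x}. G x b') + (\<Sum>b\<in>A. \<Sum>b'\<in>insert x A - {b}. G b b')"
    using insert.hyps by (simp add: sum.insert)
  have 2: "insert x A - {x} = A" using insert.hyps by auto
  have 3: "(\<Sum>b'\<in>insert x A - {b}. G b b') = G b x + (\<Sum>b'\<in>A - {b}. G b b')" if "b \<in> A" for b
  proof -
    have "insert x A - {b} = insert x (A - {b})" using that insert.hyps by auto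
    then show ?thesis using insert.hyps by (simp add: sum.insert)
  qed
  have "(\<Sum>b\<in>insert x A. \<Sum>b'\<in>insert x A - {b}. G b b')
      = (\<Sum>b\<in>A. G x b) + ((\<Sum>b\<in>A. G b x) + (\<Sum>b\<in>A. \<Sum>b'\<in>A - {b}. G b b'))"
    using 1 2 3 by (simp add: sum.distrib)
  also have "\<dots> = (\<Sum>b\<in>A. G x b + G b x)" using IH by (simp add: sum.distrib)
  also have "\<dots> = 0"
  proof (rule sum.neutral, rule ballI)
    fix b assume "b \<in> A"
    then have "x \<noteq> b" using insert.hyps by auto
    then have "G x b = - G b x" using insert.prems \<open>b \<in> A\<close> by blast
    then show "G x b + G b x = 0" by simp
  qed
  finally show ?case .
qed

context
  fixes scale :: "'r::comm_ring_1 \<Rightarrow> 'm::ab_group_add \<Rightarrow> 'm" and L :: "'a::order set"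
    and F :: "'a \<Rightarrow> 'm set" and Fr :: "'a \<Rightarrow> 'a \<Rightarrow> 'm \<Rightarrow> 'm"
  assumes md: "module scale" and sh: "sheaf_on scale L F Fr"
begin

lemma F_zero: "x \<in> L \<Longrightarrow> 0 \<in> F x" using sh by (simp add: sheaf_on_def)
lemma F_add: "x \<in> L \<Longrightarrow> v \<in> F x \<Longrightarrow> w \<in> F x \<Longrightarrow> v + w \<in> F x" using sh by (simp add: sheaf_on_def)
lemma F_sm: "x \<in> L \<Longrightarrow> v \<in> F x \<Longrightarrow> scale r v \<in> F x" using sh by (simp add: sheaf_on_def)
lemma F_neg: "x \<in> L \<Longrightarrow> v \<in> F x \<Longrightarrow> - v \<in> F x"
  using F_sm[of x v "- 1"] module.scale_minus_left[OF md] module.scale_one[OF md] by simp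
lemma F_sg: "x \<in> L \<Longrightarrow> v \<in> F x \<Longrightarrow> sg n v \<in> F x"
  using F_neg by (simp add: sg_def)
lemma F_sum: "x \<in> L \<Longrightarrow> (\<And>i. i \<in> I \<Longrightarrow> f i \<in> F x) \<Longrightarrow> sum f I \<in> F x"
proof (induction I rule: infinite_finite_induct)
  case (infinite A) then show ?case using F_zero by simp
next
  case empty then show ?case using F_zero by simp
next
  case (insert a A) then show ?case using F_add by simp
qed

lemma Fr_in: "x \<in> L \<Longrightarrow> y \<in> L \<Longrightarrow> x \<le> y \<Longrightarrow> v \<in> F y \<Longrightarrow> Fr y x v \<in> F x"
  using sh by (simp add: sheaf_on_def)
lemma Fr_add: "x \<in> L \<Longrightarrow> y \<in> L \<Longrightarrow> x \<le> y \<Longrightarrow> v \<in> F y \<Longrightarrow> w \<in> F y \<Longrightarrow> Fr y x (v + w) = Fr y x v + Fr y x w"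
  using sh by (simp add: sheaf_on_def)
lemma Fr_sm: "x \<in> L \<Longrightarrow> y \<in> L \<Longrightarrow> x \<le> y \<Longrightarrow> v \<in> F y \<Longrightarrow> Fr y x (scale r v) = scale r (Fr y x v)"
  using sh by (simp add: sheaf_on_def)
lemma Fr_id: "x \<in> L \<Longrightarrow> v \<in> F x \<Longrightarrow> Fr x x v = v"
  using sh by (simp add: sheaf_on_def)
lemma Fr_comp: "x \<in> L \<Longrightarrow> y \<in> L \<Longrightarrow> z \<in> L \<Longrightarrow> x \<le> y \<Longrightarrow> y \<le> z \<Longrightarrow> v \<in> F z \<Longrightarrow> Fr y x (Fr z y v) = Fr z x v"
  using sh by (simp add: sheaf_on_def)
lemma Fr_zero: "x \<in> L \<Longrightarrow> y \<in> L \<Longrightarrow> x \<le> y \<Longrightarrow> Fr y x 0 = 0"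
  using Fr_add[of x y 0 0] F_zero[of y] by simp
lemma Fr_neg: "x \<in> L \<Longrightarrow> y \<in> L \<Longrightarrow> x \<le> y \<Longrightarrow> v \<in> F y \<Longrightarrow> Fr y x (- v) = - Fr y x v"
proof -
  assume a: "x \<in> L" "y \<in> L" "x \<le> y" "v \<in> F y"
  have "Fr y x v + Fr y x (- v) = 0" using Fr_add[OF a(1-3) a(4) F_neg[OF a(2) a(4)]] Fr_zero[OF a(1-3)] by simp
  then show ?thesis by (metis neg_eq_iff_add_eq_0)
qed
lemma Fr_sg: "x \<in> L \<Longrightarrow> y \<in> L \<Longrightarrow> x \<le> y \<Longrightarrow> v \<in> F y \<Longrightarrow> Fr y x (sg n v) = sg n (Fr y x v)"
  using Fr_neg by (simp add: sg_def)
lemma Fr_sum: "x \<in> L \<Longrightarrow> y \<in> L \<Longrightarrow> x \<le> y \<Longrightarrow> (\<And>i. i \<in> I \<Longrightarrow> f i \<in> F y) \<Longrightarrow>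
   Fr y x (sum f I) = (\<Sum>i\<in>I. Fr y x (f i))"
proof (induction I rule: infinite_finite_induct)
  case (infinite A) then show ?case using Fr_zero by simp
next
  case empty then show ?case using Fr_zero by simp
next
  case (insert a A)
  have "sum f A \<in> F y" using insert.prems by (intro F_sum) auto
  then show ?case using insert Fr_add[of x y "f a" "sum f A"] by simp
qed

end

section \<open>Boolean complexes\<close>

definition gch :: "'a set \<Rightarrow> ('a set \<Rightarrow> 'a) \<Rightarrow> ('a \<Rightarrow> 'm::ab_group_add set) \<Rightarrow> int \<Rightarrow> ('a set \<Rightarrow> 'm) set" where
  "gch X J F k = {c. (\<forall>S. S \<subseteq> X \<and> int (card S) = k \<longrightarrow> c S \<in> F (J S)) \<and>
                    (\<forall>S. \<not> (S \<subseteq> X \<and> int (card S) = k) \<longrightarrow> c S = 0)}"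

definition gbd :: "'a set \<Rightarrow> ('a set \<Rightarrow> 'a) \<Rightarrow> ('a \<Rightarrow> 'a \<Rightarrow> 'm \<Rightarrow> 'm) \<Rightarrow> ('a \<Rightarrow> nat) \<Rightarrow> int
    \<Rightarrow> ('a set \<Rightarrow> 'm::ab_group_add) \<Rightarrow> ('a set \<Rightarrow> 'm)" where
  "gbd X J Fr num k c = (\<lambda>S. if S \<subseteq> X \<and> int (card S) = k - 1
      then (\<Sum>b\<in>X - S. sgn_term num S b (Fr (J (insert b S)) (J S) (c (insert b S))))
      else 0)"

lemma chains_gch: "chains M F = gch (atoms M) (bjoin M) F"
  by (auto simp: fun_eq_iff chains_def gch_def)

lemma bd_gbd: "bd M Fr num = gbd (atoms M) (bjoin M) Fr num"
  by (simp add: fun_eq_iff bd_def gbd_def)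

lemma gch_cong: "(\<And>S. S \<subseteq> X \<Longrightarrow> J S = J' S) \<Longrightarrow> gch X J F = gch X J' F"
  by (auto simp: fun_eq_iff gch_def)

lemma gbd_cong: "(\<And>S. S \<subseteq> X \<Longrightarrow> J S = J' S) \<Longrightarrow> gbd X J Fr num = gbd X J' Fr num"
  by (auto simp: fun_eq_iff gbd_def intro!: sum.cong)

locale bc =
  fixes scale :: "'r::comm_ring_1 \<Rightarrow> 'm::ab_group_add \<Rightarrow> 'm" and L :: "'a::order set"
    and F :: "'a \<Rightarrow> 'm set" and Fr :: "'a \<Rightarrow> 'a \<Rightarrow> 'm \<Rightarrow> 'm" and num :: "'a \<Rightarrow> nat"
    and X :: "'a set" and J :: "'a set \<Rightarrow> 'a"
  assumes md: "module scale" and sh: "sheaf_on scale L F Fr" and inj: "inj_on num X"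
    and finX: "finite X" and J_in: "S \<subseteq> X \<Longrightarrow> J S \<in> L"
    and J_mono: "S \<subseteq> T \<Longrightarrow> T \<subseteq> X \<Longrightarrow> J S \<le> J T"
begin

abbreviation "Ch \<equiv> gch X J F"
abbreviation "D \<equiv> gbd X J Fr num"

lemma ch_val: "c \<in> Ch k \<Longrightarrow> T \<subseteq> X \<Longrightarrow> c T \<in> F (J T)"
  unfolding gch_def using F_zero[OF md sh] J_in by (cases "int (card T) = k") auto

lemma ch_out: "c \<in> Ch k \<Longrightarrow> \<not> (S \<subseteq> X \<and> int (card S) = k) \<Longrightarrow> c S = 0"
  unfolding gch_def by auto

lemma chI: "(\<And>S. S \<subseteq> X \<Longrightarrow> int (card S) = k \<Longrightarrow> c S \<in> F (J S)) \<Longrightarrow>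
   (\<And>S. \<not> (S \<subseteq> X \<and> int (card S) = k) \<Longrightarrow> c S = 0) \<Longrightarrow> c \<in> Ch k"
  unfolding gch_def by auto

lemma J_ins: "b \<in> X \<Longrightarrow> S \<subseteq> X \<Longrightarrow> J S \<le> J (insert b S)"
  using J_mono[of S "insert b S"] by auto

lemma term_in: "c \<in> Ch k \<Longrightarrow> S \<subseteq> X \<Longrightarrow> b \<in> X \<Longrightarrow>
  sgn_term num S b (Fr (J (insert b S)) (J S) (c (insert b S))) \<in> F (J S)"
  unfolding sgn_term_sg
  by (intro F_sg[OF md sh] Fr_in[OF md sh] J_in J_ins ch_val) auto

lemma D_in: "c \<in> Ch k \<Longrightarrow> D k c \<in> Ch (k - 1)"
  by (rule chI) (auto simp: gbd_def intro!: F_sum[OF md sh] J_in term_in)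

lemma cx: "cx scale Ch D"
proof (rule cx.intro)
  show "module scale" by (rule md)
next
  fix k show "0 \<in> Ch k" using F_zero[OF md sh] J_in by (auto simp: gch_def)
next
  fix x y k assume "x \<in> Ch k" "y \<in> Ch k"
  then show "x + y \<in> Ch k" using F_add[OF md sh] J_in by (auto simp: gch_def)
next
  fix x k assume "x \<in> Ch k"
  then show "- x \<in> Ch k" using F_neg[OF md sh] J_in by (auto simp: gch_def)
next
  fix x k r assume "x \<in> Ch k"
  then show "smf scale r x \<in> Ch k" using F_sm[OF md sh] J_in module.scale_zero_right[OF md]
    by (auto simp: gch_def smf_def)
next
  fix x k assume "x \<in> Ch k"
  then show "D k x \<in> Ch (k - 1)" by (rule D_in)
next
  fix x y k assume x: "x \<in> Ch k" and y: "y \<in> Ch k"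
  show "D k (x + y) = D k x + D k y"
  proof (rule ext)
    fix S
    show "D k (x + y) S = (D k x + D k y) S"
    proof (cases "S \<subseteq> X \<and> int (card S) = k - 1")
      case True
      have "\<And>b. b \<in> X - S \<Longrightarrow> Fr (J (insert b S)) (J S) ((x + y) (insert b S)) =
          Fr (J (insert b S)) (J S) (x (insert b S)) + Fr (J (insert b S)) (J S) (y (insert b S))"
        using True by (auto simp: plus_fun_def intro!: Fr_add[OF md sh] J_in J_ins ch_val x y)
      then have h: "\<And>b. b \<in> X - S \<Longrightarrow> sgn_term num S b (Fr (J (insert b S)) (J S) ((x + y) (insert b S))) =
          sgn_term num S b (Fr (J (insert b S)) (J S) (x (insert b S))) +
          sgn_term num S b (Fr (J (insert b S)) (J S) (y (insert b S)))"
        by (simp add: sgn_term_sg sg_add_v)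
      have e: "D k z S = (\<Sum>b\<in>X - S. sgn_term num S b (Fr (J (insert b S)) (J S) (z (insert b S))))" for z
        using True by (simp add: gbd_def)
      have "D k (x + y) S = D k x S + D k y S"
        unfolding e sum.distrib[symmetric] by (rule sum.cong[OF refl], rule h)
      then show ?thesis by simp
    next
      case False
      have "D k z S = 0" for z unfolding gbd_def by (simp only: False if_False)
      then show ?thesis by (simp only: plus_fun_apply add_0)
    qed
  qed
next
  fix x k r assume x: "x \<in> Ch k"
  show "D k (smf scale r x) = smf scale r (D k x)"
  proof (rule ext)
    fix S
    show "D k (smf scale r x) S = smf scale r (D k x) S"
    proof (cases "S \<subseteq> X \<and> int (card S) = k - 1")
      case True
      have "\<And>b. b \<in> X - S \<Longrightarrow> sgn_term num S b (Fr (J (insert b S)) (J S) (scale r (x (insert b S)))) =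
          scale r (sgn_term num S b (Fr (J (insert b S)) (J S) (x (insert b S))))"
        using True module.scale_minus_right[OF md]
        by (auto simp: sgn_term_sg sg_def intro!: Fr_sm[OF md sh] J_in J_ins ch_val x)
      then show ?thesis using True
        by (simp add: gbd_def smf_def module.scale_sum_right[OF md])
    next
      case False
      have "D k z S = 0" for z unfolding gbd_def by (simp only: False if_False)
      then show ?thesis by (simp add: smf_def module.scale_zero_right[OF md])
    qed
  qed
next
  fix c k assume c: "c \<in> Ch k"
  show "D (k - 1) (D k c) = 0"
  proof (rule ext)
    fix S
    show "D (k - 1) (D k c) S = 0 S"
    proof (cases "S \<subseteq> X \<and> int (card S) = k - 1 - 1")
      case False
      have "D (k - 1) z S = 0" for z unfolding gbd_def by (simp only: False if_False)
      then show ?thesis by simp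
    next
      case True
      then have SX: "S \<subseteq> X" and fS: "finite S" using finX finite_subset by auto
      define W where "W b b' = Fr (J (insert b' (insert b S))) (J S) (c (insert b' (insert b S)))" for b b'
      define G where "G b b' = sg (cnt num S b + cnt num S b' + (if num b < num b' then 1 else 0)) (W b b')" for b b'
      have inner: "sgn_term num S b (Fr (J (insert b S)) (J S) (D k c (insert b S)))
          = (\<Sum>b'\<in>(X - S) - {b}. G b b')" if b: "b \<in> X - S" for b
      proof -
        have bS: "insert b S \<subseteq> X" "int (card (insert b S)) = k - 1" using b True fS by auto
        have Dc: "D k c (insert b S) = (\<Sum>b'\<in>X - insert b S. sgn_term num (insert b S) b'
            (Fr (J (insert b' (insert b S))) (J (insert b S)) (c (insert b' (insert b S)))))"
          using bS by (simp add: gbd_def)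
        have "Fr (J (insert b S)) (J S) (D k c (insert b S)) = (\<Sum>b'\<in>X - insert b S.
           Fr (J (insert b S)) (J S) (sgn_term num (insert b S) b'
            (Fr (J (insert b' (insert b S))) (J (insert b S)) (c (insert b' (insert b S))))))"
          unfolding Dc using bS b by (intro Fr_sum[OF md sh] J_in J_ins term_in[OF c]) auto
        also have "\<dots> = (\<Sum>b'\<in>X - insert b S. sgn_term num (insert b S) b' (W b b'))"
        proof (rule sum.cong[OF refl])
          fix b' assume b': "b' \<in> X - insert b S"
          have m1: "J S \<le> J (insert b S)" using b SX by (intro J_ins) auto
          have m2: "J (insert b S) \<le> J (insert b' (insert b S))" using b b' SX by (intro J_ins) auto
          have inS: "J S \<in> L" "J (insert b S) \<in> L" "J (insert b' (insert b S)) \<in> L"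
            using b b' SX by (auto intro!: J_in)
          have cv: "c (insert b' (insert b S)) \<in> F (J (insert b' (insert b S)))"
            using b b' SX by (auto intro!: ch_val[OF c])
          show "Fr (J (insert b S)) (J S) (sgn_term num (insert b S) b'
            (Fr (J (insert b' (insert b S))) (J (insert b S)) (c (insert b' (insert b S)))))
            = sgn_term num (insert b S) b' (W b b')"
            unfolding sgn_term_sg W_def
            using Fr_sg[OF md sh inS(1,2) m1 Fr_in[OF md sh inS(2,3) m2 cv]]
                  Fr_comp[OF md sh inS m1 m2 cv] by simp
        qed
        finally have "Fr (J (insert b S)) (J S) (D k c (insert b S)) =
            (\<Sum>b'\<in>X - insert b S. sgn_term num (insert b S) b' (W b b'))" .
        moreover have "X - insert b S = (X - S) - {b}" by auto
        ultimately show ?thesis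
          using b fS
          by (simp add: sgn_term_sg sg_sum G_def cnt_insert sg_plus[symmetric] add.assoc add.left_commute)
      qed
      have "D (k - 1) (D k c) S = (\<Sum>b\<in>X - S. \<Sum>b'\<in>(X - S) - {b}. G b b')"
        using True inner by (simp add: gbd_def)
      also have "\<dots> = 0"
      proof (rule antisym_sum)
        show "finite (X - S)" using finX by simp
        show "\<forall>b\<in>X - S. \<forall>b'\<in>X - S. b \<noteq> b' \<longrightarrow> G b b' = - G b' b"
        proof (intro ballI impI)
          fix b b' assume b: "b \<in> X - S" and b': "b' \<in> X - S" and ne: "b \<noteq> b'"
          have "num b \<noteq> num b'" using inj b b' ne by (auto dest: inj_onD)
          moreover have "W b b' = W b' b" by (simp add: W_def insert_commute)
          ultimately show "G b b' = - G b' b"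
            by (cases "num b < num b'") (auto simp: G_def sg_def add.commute)
        qed
      qed
      finally show ?thesis by simp
    qed
  qed
qed

sublocale cx scale Ch D by (rule cx)

end

lemma gch_out: "c \<in> gch Y J F k \<Longrightarrow> \<not> (S \<subseteq> Y \<and> int (card S) = k) \<Longrightarrow> c S = 0"
  unfolding gch_def by blast

lemma gch_in: "c \<in> gch Y J F k \<Longrightarrow> S \<subseteq> Y \<Longrightarrow> int (card S) = k \<Longrightarrow> c S \<in> F (J S)"
  unfolding gch_def by blast

context bc
begin

lemma bc_sub: "Y \<subseteq> X \<Longrightarrow> bc scale L F Fr num Y J"
  by (rule bc.intro[OF md sh]) (auto intro: inj_on_subset[OF inj] finite_subset[OF _ finX] J_in J_mono)

lemma gch_sub: assumes YX: "Y \<subseteq> X" shows "gch Y J F k \<subseteq> Ch k"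
proof
  fix c assume c: "c \<in> gch Y J F k"
  show "c \<in> Ch k"
  proof (rule chI)
    fix S assume S: "S \<subseteq> X" "int (card S) = k"
    show "c S \<in> F (J S)"
    proof (cases "S \<subseteq> Y")
      case True then show ?thesis using gch_in[OF c] S by blast
    next
      case False
      then have "c S = 0" using gch_out[OF c] by blast
      then show ?thesis using F_zero[OF md sh] J_in S by simp
    qed
  next
    fix S assume "\<not> (S \<subseteq> X \<and> int (card S) = k)"
    then have "\<not> (S \<subseteq> Y \<and> int (card S) = k)" using YX by blast
    then show "c S = 0" using gch_out[OF c] by blast
  qed
qed

lemma gbd_sub: assumes YX: "Y \<subseteq> X" and c: "c \<in> gch Y J F k"
  shows "D k c = gbd Y J Fr num k c"
proof (rule ext)
  fix S
  have cX: "c \<in> Ch k" using gch_sub[OF YX] c by blast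
  have z: "sgn_term num S b (Fr (J (insert b S)) (J S) (c (insert b S))) = 0"
    if "S \<subseteq> X" "b \<in> X" "\<not> insert b S \<subseteq> Y" for b
  proof -
    have "\<not> (insert b S \<subseteq> Y \<and> int (card (insert b S)) = k)" using that by blast
    then have "c (insert b S) = 0" using gch_out[OF c] by blast
    moreover have "Fr (J (insert b S)) (J S) 0 = 0"
      using Fr_zero[OF md sh] J_in[of S] J_in[of "insert b S"] J_ins[of b S] that by simp
    ultimately show ?thesis by (simp add: sgn_term_def)
  qed
  show "D k c S = gbd Y J Fr num k c S"
  proof (cases "S \<subseteq> Y \<and> int (card S) = k - 1")
    case True
    then have SX: "S \<subseteq> X" using YX by auto
    have "D k c S = (\<Sum>b\<in>X - S. sgn_term num S b (Fr (J (insert b S)) (J S) (c (insert b S))))"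
      using True SX by (simp add: gbd_def)
    also have "\<dots> = (\<Sum>b\<in>Y - S. sgn_term num S b (Fr (J (insert b S)) (J S) (c (insert b S))))"
      by (rule sum.mono_neutral_right) (use finX YX z SX in auto)
    finally show ?thesis using True by (simp add: gbd_def)
  next
    case False
    show ?thesis
    proof (cases "S \<subseteq> X \<and> int (card S) = k - 1")
      case True
      then have "\<not> S \<subseteq> Y" using False by auto
      then have "D k c S = 0" using True z by (simp add: gbd_def)
      moreover have "gbd Y J Fr num k c S = 0" unfolding gbd_def by (simp only: False if_False)
      ultimately show ?thesis by simp
    next
      case F2: False
      have "D k c S = 0" unfolding gbd_def by (simp only: F2 if_False)
      moreover have "gbd Y J Fr num k c S = 0" unfolding gbd_def by (simp only: False if_False)
      ultimately show ?thesis by simp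
    qed
  qed
qed

lemma Zs_sub: assumes YX: "Y \<subseteq> X" shows "cx.Zs (gch Y J F) (gbd Y J Fr num) k \<subseteq> Zs k"
proof
  interpret Y: cx scale "gch Y J F" "gbd Y J Fr num" using bc.cx[OF bc_sub[OF YX]] .
  fix z assume "z \<in> Y.Zs k"
  then have z: "z \<in> gch Y J F k" "gbd Y J Fr num k z = 0" by (auto simp: Y.Zs_def)
  then show "z \<in> Zs k" using gch_sub[OF YX] gbd_sub[OF YX z(1)] by (auto simp: Zs_def)
qed

lemma Bs_sub: assumes YX: "Y \<subseteq> X" shows "cx.Bs (gch Y J F) (gbd Y J Fr num) k \<subseteq> Bs k"
proof
  interpret Y: cx scale "gch Y J F" "gbd Y J Fr num" using bc.cx[OF bc_sub[OF YX]] .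
  fix z assume "z \<in> Y.Bs k"
  then obtain c where c: "c \<in> gch Y J F (k + 1)" "z = gbd Y J Fr num (k + 1) c" by (auto simp: Y.Bs_def)
  then have "z = D (k + 1) c" "c \<in> Ch (k + 1)" using gbd_sub[OF YX c(1)] gch_sub[OF YX] by auto
  then show "z \<in> Bs k" by (auto simp: Bs_def)
qed

lemma gch_Y_iff: assumes xX: "x \<in> X"
  shows "c \<in> gch (X - {x}) J F k \<longleftrightarrow> c \<in> Ch k \<and> (\<forall>T. x \<in> T \<longrightarrow> c T = 0)"
proof
  assume c: "c \<in> gch (X - {x}) J F k"
  have "c \<in> Ch k" using c gch_sub[of "X - {x}"] by blast
  moreover have "\<forall>T. x \<in> T \<longrightarrow> c T = 0" using gch_out[OF c] by blast
  ultimately show "c \<in> Ch k \<and> (\<forall>T. x \<in> T \<longrightarrow> c T = 0)" by blast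
next
  assume c: "c \<in> Ch k \<and> (\<forall>T. x \<in> T \<longrightarrow> c T = 0)"
  show "c \<in> gch (X - {x}) J F k"
  proof (unfold gch_def, intro CollectI conjI allI impI)
    fix S assume "S \<subseteq> X - {x} \<and> int (card S) = k"
    then have "S \<subseteq> X" by blast
    then show "c S \<in> F (J S)" using c ch_val[of c k S] by blast
  next
    fix S assume S: "\<not> (S \<subseteq> X - {x} \<and> int (card S) = k)"
    show "c S = 0"
    proof (cases "x \<in> S")
      case True then show ?thesis using c by blast
    next
      case False
      then have "\<not> (S \<subseteq> X \<and> int (card S) = k)" using S by blast
      then show ?thesis using c ch_out by blast
    qed
  qed
qed

end

locale bc_step = bc +
  fixes x y
  assumes xX: "x \<in> X" and yX: "y \<in> X" and xy: "x \<noteq> y"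
    and Jy: "\<And>T. T \<subseteq> X \<Longrightarrow> x \<in> T \<Longrightarrow> J (insert y T) = J T"
begin

definition hh where
  "hh c = (\<lambda>T. if T \<subseteq> X \<and> x \<in> T \<and> y \<in> T then sg (cnt num (T - {y}) y) (c (T - {y})) else 0)"

lemma finT: "T \<subseteq> X \<Longrightarrow> finite T" using finX finite_subset by auto

lemma J_rem: assumes "T \<subseteq> X" "x \<in> T" "y \<in> T" shows "J (T - {y}) = J T"
proof -
  have "J (insert y (T - {y})) = J (T - {y})" using Jy[of "T - {y}"] assms xy by blast
  moreover have "insert y (T - {y}) = T" using assms by blast
  ultimately show ?thesis by simp
qed

lemma card_rem: "T \<subseteq> X \<Longrightarrow> y \<in> T \<Longrightarrow> card T = Suc (card (T - {y}))"
  using card.remove[of T y] finT by simp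

lemma hh_ch: assumes c: "c \<in> Ch k" shows "hh c \<in> Ch (k + 1)"
proof (rule chI)
  fix T assume T: "T \<subseteq> X" "int (card T) = k + 1"
  show "hh c T \<in> F (J T)"
  proof (cases "x \<in> T \<and> y \<in> T")
    case True
    then have "c (T - {y}) \<in> F (J T)" using ch_val[OF c, of "T - {y}"] J_rem T by auto
    then show ?thesis using True T F_sg[OF md sh] J_in by (simp add: hh_def)
  next
    case False then show ?thesis using F_zero[OF md sh] J_in T by (auto simp: hh_def)
  qed
next
  fix T assume T: "\<not> (T \<subseteq> X \<and> int (card T) = k + 1)"
  show "hh c T = 0"
  proof (cases "T \<subseteq> X \<and> x \<in> T \<and> y \<in> T")
    case True
    then have "card T = Suc (card (T - {y}))" using card_rem[of T] by blast
    then have "int (card (T - {y})) \<noteq> k" using T True by linarith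
    then have "c (T - {y}) = 0" using ch_out[OF c] by blast
    then show ?thesis by (simp add: hh_def sg_zero_v)
  next
    case False then show ?thesis by (auto simp: hh_def)
  qed
qed

lemma hh_vanish: "(\<And>T. x \<in> T \<Longrightarrow> w T = 0) \<Longrightarrow> hh w = 0"
  using xy by (auto simp: hh_def fun_eq_iff sg_zero_v)

lemma hh_zero: "hh 0 = 0"
  by (simp add: hh_def fun_eq_iff sg_zero_v)

lemma hh_diff: "hh (u - v) = hh u - hh v"
  by (auto simp: hh_def fun_eq_iff sg_def)

lemma sgn_cancel: assumes "num b \<noteq> num y"
  shows "sg (cnt num S b + (if num y < num b then 1 else 0)) (sg (cnt num S y + (if num b < num y then 1 else 0)) v)
       = - sg (cnt num S y) (sg (cnt num S b) v)"
  using assms by (cases "num y < num b") (auto simp: sg_def)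

lemma key: assumes c: "c \<in> Ch k" and T: "T \<subseteq> X" "x \<in> T"
  shows "D (k + 1) (hh c) T + hh (D k c) T = c T"
proof (cases "int (card T) = k")
  case False
  have 1: "c T = 0" using ch_out[OF c] False by blast
  have 2: "D (k + 1) (hh c) T = 0" using False by (simp add: gbd_def)
  have 3: "hh (D k c) T = 0"
  proof (cases "y \<in> T")
    case True
    have "card T = Suc (card (T - {y}))" using card_rem[OF T(1) True] .
    then have "\<not> int (card (T - {y})) = k - 1" using False by linarith
    then have "D k c (T - {y}) = 0" by (simp add: gbd_def)
    then show ?thesis by (simp add: hh_def sg_zero_v)
  next
    case False then show ?thesis by (simp add: hh_def)
  qed
  show ?thesis using 1 2 3 by simp
next
  case cardT: True
  have fT: "finite T" using finT[OF T(1)] .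
  show ?thesis
  proof (cases "y \<in> T")
    case yT: True
    define S where "S = T - {y}"
    have TS: "T = insert y S" "y \<notin> S" "x \<in> S" "S \<subseteq> X" using yT T xy by (auto simp: S_def)
    have fS: "finite S" using fT by (simp add: S_def)
    have cS: "int (card S) = k - 1" using cardT TS fS by simp
    have JS: "J S = J T" using J_rem T yT by (simp add: S_def)
    have XS: "X - S = insert y (X - T)" "y \<notin> X - T" using TS yX by auto
    define B where "B b = sg (cnt num S y) (sg (cnt num S b) (Fr (J (insert b S)) (J S) (c (insert b S))))" for b
    have hD: "hh (D k c) T = c T + (\<Sum>b\<in>X - T. B b)"
    proof -
      have "hh (D k c) T = sg (cnt num S y) (D k c S)" using T yT by (simp add: hh_def S_def)
      also have "D k c S = (\<Sum>b\<in>X - S. sgn_term num S b (Fr (J (insert b S)) (J S) (c (insert b S))))"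
        using TS cS by (simp add: gbd_def)
      also have "\<dots> = sgn_term num S y (Fr (J (insert y S)) (J S) (c (insert y S))) +
           (\<Sum>b\<in>X - T. sgn_term num S b (Fr (J (insert b S)) (J S) (c (insert b S))))"
        unfolding XS(1) using XS(2) finX by (simp add: sum.insert)
      finally have "hh (D k c) T = sg (cnt num S y) (sgn_term num S y (Fr (J T) (J T) (c T))) + (\<Sum>b\<in>X - T. B b)"
        unfolding B_def by (simp add: sg_add_v sg_sum sgn_term_sg TS(1)[symmetric] JS)
      also have "Fr (J T) (J T) (c T) = c T" using Fr_id[OF md sh] J_in T ch_val[OF c T(1)] by simp
      finally show ?thesis by (simp add: sgn_term_sg sg_sg)
    qed
    have dh: "D (k + 1) (hh c) T = (\<Sum>b\<in>X - T. - B b)"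
    proof -
      have "D (k + 1) (hh c) T = (\<Sum>b\<in>X - T. sgn_term num T b (Fr (J (insert b T)) (J T) (hh c (insert b T))))"
        using T cardT by (simp add: gbd_def)
      also have "\<dots> = (\<Sum>b\<in>X - T. - B b)"
      proof (rule sum.cong[OF refl])
        fix b assume b: "b \<in> X - T"
        have bS: "b \<noteq> y" "b \<notin> S" "insert b T - {y} = insert b S" using b TS by auto
        have h1: "hh c (insert b T) = sg (cnt num (insert b S) y) (c (insert b S))"
          using b T yT bS by (simp add: hh_def)
        have J1: "J (insert b T) = J (insert b S)"
          using Jy[of "insert b S"] TS b by (simp add: insert_commute)
        have inL: "J S \<in> L" "J (insert b S) \<in> L" using TS b by (auto intro!: J_in)
        have le: "J S \<le> J (insert b S)" using TS b by (intro J_ins) auto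
        have cv: "c (insert b S) \<in> F (J (insert b S))" using TS b by (intro ch_val[OF c]) auto
        have nb: "num b \<noteq> num y" using inj b yX bS by (auto dest: inj_onD)
        have cT: "cnt num T b = cnt num S b + (if num y < num b then 1 else 0)"
          using cnt_insert[OF fS TS(2)] TS(1) by simp
        have cb: "cnt num (insert b S) y = cnt num S y + (if num b < num y then 1 else 0)"
          using cnt_insert[OF fS bS(2)] by simp
        have "sgn_term num T b (Fr (J (insert b T)) (J T) (hh c (insert b T)))
           = sg (cnt num T b) (Fr (J (insert b S)) (J S) (sg (cnt num (insert b S) y) (c (insert b S))))"
          by (simp only: sgn_term_sg h1 J1 JS[symmetric])
        also have "\<dots> = sg (cnt num S b + (if num y < num b then 1 else 0))
               (sg (cnt num S y + (if num b < num y then 1 else 0)) (Fr (J (insert b S)) (J S) (c (insert b S))))"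
          unfolding cT cb using Fr_sg[OF md sh inL le cv] by simp
        also have "\<dots> = - B b" unfolding B_def by (rule sgn_cancel[OF nb])
        finally show "sgn_term num T b (Fr (J (insert b T)) (J T) (hh c (insert b T))) = - B b" .
      qed
      finally show ?thesis .
    qed
    show ?thesis using hD dh by (simp add: sum_negf)
  next
    case yT: False
    have 1: "hh (D k c) T = 0" using yT by (simp add: hh_def)
    have inT: "insert y T \<subseteq> X" using T yX by auto
    have "D (k + 1) (hh c) T = (\<Sum>b\<in>X - T. sgn_term num T b (Fr (J (insert b T)) (J T) (hh c (insert b T))))"
      using T cardT by (simp add: gbd_def)
    also have "\<dots> = sgn_term num T y (Fr (J (insert y T)) (J T) (hh c (insert y T))) +
        (\<Sum>b\<in>X - T - {y}. sgn_term num T b (Fr (J (insert b T)) (J T) (hh c (insert b T))))"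
      using yT yX finX by (subst sum.remove[of _ y]) auto
    also have "(\<Sum>b\<in>X - T - {y}. sgn_term num T b (Fr (J (insert b T)) (J T) (hh c (insert b T)))) = 0"
    proof (rule sum.neutral, rule ballI)
      fix b assume b: "b \<in> X - T - {y}"
      then have "y \<notin> insert b T" using yT by blast
      then have "hh c (insert b T) = 0" unfolding hh_def by simp
      then show "sgn_term num T b (Fr (J (insert b T)) (J T) (hh c (insert b T))) = 0"
        using Fr_zero[OF md sh] J_in J_ins b T by (simp add: sgn_term_def)
    qed
    also have "hh c (insert y T) = sg (cnt num T y) (c T)"
      using inT T yT by (simp add: hh_def)
    also have "J (insert y T) = J T" using Jy T by simp
    also have "Fr (J T) (J T) (sg (cnt num T y) (c T)) = sg (cnt num T y) (c T)"
      using Fr_id[OF md sh] F_sg[OF md sh] J_in T ch_val[OF c T(1)] by simp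
    finally show ?thesis using 1 by (simp add: sgn_term_sg sg_sg)
  qed
qed

lemma gchY: "c \<in> gch (X - {x}) J F k \<longleftrightarrow> c \<in> Ch k \<and> (\<forall>T. x \<in> T \<longrightarrow> c T = 0)"
  using gch_Y_iff[OF xX] .

lemma cxY: "cx scale (gch (X - {x}) J F) (gbd (X - {x}) J Fr num)"
  using bc.cx[OF bc_sub] by blast

lemma step_surj: assumes z: "z \<in> Zs k"
  shows "\<exists>z'. z' \<in> cx.Zs (gch (X - {x}) J F) (gbd (X - {x}) J Fr num) k \<and> z - z' \<in> Bs k"
proof -
  have zC: "z \<in> Ch k" and dz: "D k z = 0" using z by (auto simp: Zs_def)
  have hz: "hh z \<in> Ch (k + 1)" using hh_ch[OF zC] .
  define z' where "z' = z - D (k + 1) (hh z)"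
  have dhz: "D (k + 1) (hh z) \<in> Ch k" using D_ch'[OF hz] .
  have z'C: "z' \<in> Ch k" unfolding z'_def using zC dhz by (rule ch_diff)
  have "hh (D k z) = 0" using dz hh_zero by simp
  then have "z' T = 0" if "x \<in> T" for T
  proof (cases "T \<subseteq> X")
    case True
    have "D (k + 1) (hh z) T + hh (D k z) T = z T" using key[OF zC True that] .
    then show ?thesis using \<open>hh (D k z) = 0\<close> by (simp add: z'_def)
  next
    case False then show ?thesis using ch_out[OF z'C] by blast
  qed
  then have z'Y: "z' \<in> gch (X - {x}) J F k" using gchY z'C by blast
  have "D k z' = 0" unfolding z'_def using D_diff[OF zC dhz] dz DD'[OF hz] by simp
  then have "gbd (X - {x}) J Fr num k z' = 0" using gbd_sub[OF _ z'Y] by auto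
  then have "z' \<in> cx.Zs (gch (X - {x}) J F) (gbd (X - {x}) J Fr num) k"
    using z'Y by (simp add: cx.Zs_def[OF cxY])
  moreover have "z - z' \<in> Bs k" unfolding z'_def Bs_def using hz by simp
  ultimately show ?thesis by blast
qed

lemma step_inj: assumes z: "z \<in> cx.Zs (gch (X - {x}) J F) (gbd (X - {x}) J Fr num) k"
    and zB: "z \<in> Bs k"
  shows "z \<in> cx.Bs (gch (X - {x}) J F) (gbd (X - {x}) J Fr num) k"
proof -
  have zY: "z \<in> gch (X - {x}) J F k" using z by (simp add: cx.Zs_def[OF cxY])
  obtain c where c: "c \<in> Ch (k + 1)" "z = D (k + 1) c" using zB by (auto simp: Bs_def)
  have hc: "hh c \<in> Ch (k + 1 + 1)" using hh_ch[OF c(1)] .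
  define c' where "c' = c - D (k + 1 + 1) (hh c)"
  have dhc: "D (k + 1 + 1) (hh c) \<in> Ch (k + 1)" using D_ch'[OF hc] .
  have c'C: "c' \<in> Ch (k + 1)" unfolding c'_def using c(1) dhc by (rule ch_diff)
  have "hh z = 0" using zY gchY hh_vanish by blast
  then have "c' T = 0" if "x \<in> T" for T
  proof (cases "T \<subseteq> X")
    case True
    have "D (k + 1 + 1) (hh c) T + hh (D (k + 1) c) T = c T" using key[OF c(1) True that] .
    then show ?thesis using \<open>hh z = 0\<close> c(2) by (simp add: c'_def)
  next
    case False then show ?thesis using ch_out[OF c'C] by blast
  qed
  then have c'Y: "c' \<in> gch (X - {x}) J F (k + 1)" using gchY c'C by blast
  have "D (k + 1) c' = z" unfolding c'_def using D_diff[OF c(1) dhc] c(2) DD'[OF hc] by simp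
  then have "gbd (X - {x}) J Fr num (k + 1) c' = z" using gbd_sub[OF _ c'Y] by auto
  then show ?thesis using c'Y unfolding cx.Bs_def[OF cxY] by blast
qed

end

section \<open>Quasi-isomorphism by removing redundant generators\<close>

lemma qi:
  assumes bcX: "bc scale L F Fr num X J" and YX: "Y \<subseteq> X"
    and hyp: "\<forall>x\<in>X - Y. \<exists>y\<in>Y. \<forall>T. T \<subseteq> X \<longrightarrow> x \<in> T \<longrightarrow> J (insert y T) = J T"
  shows "(\<forall>z\<in>cx.Zs (gch X J F) (gbd X J Fr num) k. \<exists>z'\<in>cx.Zs (gch Y J F) (gbd Y J Fr num) k.
            z - z' \<in> cx.Bs (gch X J F) (gbd X J Fr num) k) \<and>
         (\<forall>z\<in>cx.Zs (gch Y J F) (gbd Y J Fr num) k. z \<in> cx.Bs (gch X J F) (gbd X J Fr num) k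
            \<longrightarrow> z \<in> cx.Bs (gch Y J F) (gbd Y J Fr num) k)"
proof -
  have fin: "finite (X - Y)" using bc.finX[OF bcX] by simp
  have "\<forall>X. card (X - Y) = n \<longrightarrow> finite (X - Y) \<longrightarrow> bc scale L F Fr num X J \<longrightarrow> Y \<subseteq> X \<longrightarrow>
     (\<forall>x\<in>X - Y. \<exists>y\<in>Y. \<forall>T. T \<subseteq> X \<longrightarrow> x \<in> T \<longrightarrow> J (insert y T) = J T) \<longrightarrow>
     (\<forall>z\<in>cx.Zs (gch X J F) (gbd X J Fr num) k. \<exists>z'\<in>cx.Zs (gch Y J F) (gbd Y J Fr num) k.
            z - z' \<in> cx.Bs (gch X J F) (gbd X J Fr num) k) \<and>
     (\<forall>z\<in>cx.Zs (gch Y J F) (gbd Y J Fr num) k. z \<in> cx.Bs (gch X J F) (gbd X J Fr num) k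
            \<longrightarrow> z \<in> cx.Bs (gch Y J F) (gbd Y J Fr num) k)" for n
  proof (induction n)
    case 0
    show ?case
    proof (intro allI impI)
      fix X assume a: "card (X - Y) = 0" "finite (X - Y)" "bc scale L F Fr num X J" "Y \<subseteq> X"
      interpret bc scale L F Fr num X J by (rule a(3))
      have "X = Y" using a by auto
      then show "(\<forall>z\<in>cx.Zs (gch X J F) (gbd X J Fr num) k. \<exists>z'\<in>cx.Zs (gch Y J F) (gbd Y J Fr num) k.
            z - z' \<in> cx.Bs (gch X J F) (gbd X J Fr num) k) \<and>
         (\<forall>z\<in>cx.Zs (gch Y J F) (gbd Y J Fr num) k. z \<in> cx.Bs (gch X J F) (gbd X J Fr num) k
            \<longrightarrow> z \<in> cx.Bs (gch Y J F) (gbd Y J Fr num) k)"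
        using Bs_zero by (metis diff_self)
    qed
  next
    case (Suc n)
    show ?case
    proof (intro allI impI)
      fix X assume a: "card (X - Y) = Suc n" "finite (X - Y)" "bc scale L F Fr num X J" "Y \<subseteq> X"
        and h: "\<forall>x\<in>X - Y. \<exists>y\<in>Y. \<forall>T. T \<subseteq> X \<longrightarrow> x \<in> T \<longrightarrow> J (insert y T) = J T"
      interpret bc scale L F Fr num X J by (rule a(3))
      obtain x where x: "x \<in> X - Y" using a(1) by (metis card.empty ex_in_conv nat.distinct(1))
      obtain y where y: "y \<in> Y" "\<forall>T. T \<subseteq> X \<longrightarrow> x \<in> T \<longrightarrow> J (insert y T) = J T" using h x by blast
      interpret st: bc_step scale L F Fr num X J x y
        by (rule bc_step.intro[OF a(3)], rule bc_step_axioms.intro) (use x y a(4) in auto)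
      define X' where "X' = X - {x}"
      have X'Y: "X' - Y = (X - Y) - {x}" by (auto simp: X'_def)
      have c': "card (X' - Y) = n" using a(1) a(2) x X'Y by simp
      have f': "finite (X' - Y)" using a(2) X'Y by simp
      have bc': "bc scale L F Fr num X' J" using bc_sub by (simp add: X'_def)
      have YX': "Y \<subseteq> X'" using a(4) x by (auto simp: X'_def)
      have h': "\<forall>x\<in>X' - Y. \<exists>y\<in>Y. \<forall>T. T \<subseteq> X' \<longrightarrow> x \<in> T \<longrightarrow> J (insert y T) = J T"
      proof
        fix x' assume x': "x' \<in> X' - Y"
        then obtain y' where "y' \<in> Y" "\<forall>T. T \<subseteq> X \<longrightarrow> x' \<in> T \<longrightarrow> J (insert y' T) = J T"
          using h x' unfolding X'_def by blast
        moreover have "X' \<subseteq> X" by (auto simp: X'_def)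
        ultimately show "\<exists>y\<in>Y. \<forall>T. T \<subseteq> X' \<longrightarrow> x' \<in> T \<longrightarrow> J (insert y T) = J T"
          by (meson order_trans)
      qed
      have IH: "(\<forall>z\<in>cx.Zs (gch X' J F) (gbd X' J Fr num) k. \<exists>z'\<in>cx.Zs (gch Y J F) (gbd Y J Fr num) k.
            z - z' \<in> cx.Bs (gch X' J F) (gbd X' J Fr num) k) \<and>
         (\<forall>z\<in>cx.Zs (gch Y J F) (gbd Y J Fr num) k. z \<in> cx.Bs (gch X' J F) (gbd X' J Fr num) k
            \<longrightarrow> z \<in> cx.Bs (gch Y J F) (gbd Y J Fr num) k)"
        using Suc.IH c' f' bc' YX' h' by blast
      have BX': "cx.Bs (gch X' J F) (gbd X' J Fr num) k \<subseteq> Bs k" using Bs_sub by (simp add: X'_def)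
      have ZYX': "cx.Zs (gch Y J F) (gbd Y J Fr num) k \<subseteq> cx.Zs (gch X' J F) (gbd X' J Fr num) k"
        using bc.Zs_sub[OF bc' YX'] .
      show "(\<forall>z\<in>Zs k. \<exists>z'\<in>cx.Zs (gch Y J F) (gbd Y J Fr num) k. z - z' \<in> Bs k) \<and>
         (\<forall>z\<in>cx.Zs (gch Y J F) (gbd Y J Fr num) k. z \<in> Bs k \<longrightarrow> z \<in> cx.Bs (gch Y J F) (gbd Y J Fr num) k)"
      proof (intro conjI ballI impI)
        fix z assume z: "z \<in> Zs k"
        obtain z1 where z1: "z1 \<in> cx.Zs (gch X' J F) (gbd X' J Fr num) k" "z - z1 \<in> Bs k"
          using st.step_surj[OF z] by (auto simp: X'_def)
        obtain z2 where z2: "z2 \<in> cx.Zs (gch Y J F) (gbd Y J Fr num) k"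
          "z1 - z2 \<in> cx.Bs (gch X' J F) (gbd X' J Fr num) k" using IH z1(1) by blast
        have "z - z2 = (z - z1) + (z1 - z2)" by simp
        moreover have "z1 - z2 \<in> Bs k" using z2(2) BX' by blast
        ultimately have "z - z2 \<in> Bs k" using Bs_add[OF z1(2)] by metis
        then show "\<exists>z'\<in>cx.Zs (gch Y J F) (gbd Y J Fr num) k. z - z' \<in> Bs k" using z2(1) by blast
      next
        fix z assume z: "z \<in> cx.Zs (gch Y J F) (gbd Y J Fr num) k" and zB: "z \<in> Bs k"
        have "z \<in> cx.Zs (gch X' J F) (gbd X' J Fr num) k" using ZYX' z by blast
        then have "z \<in> cx.Bs (gch X' J F) (gbd X' J Fr num) k" using st.step_inj zB by (simp add: X'_def)
        then show "z \<in> cx.Bs (gch Y J F) (gbd Y J Fr num) k" using IH z by blast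
      qed
    qed
  qed
  then show ?thesis using fin bcX YX hyp by blast
qed

lemma hom_lin_comp:
  "hom_lin scale B1 H1 B2 H2 \<phi> \<Longrightarrow> hom_lin scale B2 H2 B3 H3 \<psi> \<Longrightarrow> hom_lin scale B1 H1 B3 H3 (\<psi> \<circ> \<phi>)"
  by (simp add: hom_lin_def)

lemma hom_lin_inv:
  assumes h: "hom_lin scale B1 H1 B2 H2 \<phi>" and b: "bij_betw \<phi> H1 H2"
    and c1: "\<And>X Y. X \<in> H1 \<Longrightarrow> Y \<in> H1 \<Longrightarrow> cadd X Y \<in> H1"
    and c2: "\<And>X r. X \<in> H1 \<Longrightarrow> csmul scale B1 r X \<in> H1"
  shows "hom_lin scale B2 H2 B1 H1 (inv_into H1 \<phi>)"
proof -
  have inj: "inj_on \<phi> H1" and img: "\<phi> ` H1 = H2" using b by (auto simp: bij_betw_def)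
  have inv_in: "inv_into H1 \<phi> Y \<in> H1" if "Y \<in> H2" for Y using that img by (auto intro: inv_into_into)
  have fi: "\<phi> (inv_into H1 \<phi> Y) = Y" if "Y \<in> H2" for Y using that img by (metis f_inv_into_f)
  have e: "inv_into H1 \<phi> Y = X" if "X \<in> H1" "\<phi> X = Y" for X Y
    using that inj by (metis inv_into_f_f)
  show ?thesis
    unfolding hom_lin_def
  proof (intro conjI ballI allI)
    fix X assume "X \<in> H2" then show "inv_into H1 \<phi> X \<in> H1" by (rule inv_in)
  next
    fix X Y assume X: "X \<in> H2" and Y: "Y \<in> H2"
    have "\<phi> (cadd (inv_into H1 \<phi> X) (inv_into H1 \<phi> Y)) = cadd X Y"
      using h inv_in[OF X] inv_in[OF Y] fi[OF X] fi[OF Y] unfolding hom_lin_def by auto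
    moreover have "cadd (inv_into H1 \<phi> X) (inv_into H1 \<phi> Y) \<in> H1" using c1 inv_in X Y by blast
    ultimately show "inv_into H1 \<phi> (cadd X Y) = cadd (inv_into H1 \<phi> X) (inv_into H1 \<phi> Y)"
      using e by blast
  next
    fix r X assume X: "X \<in> H2"
    have "\<phi> (csmul scale B1 r (inv_into H1 \<phi> X)) = csmul scale B2 r X"
      using h inv_in[OF X] fi[OF X] unfolding hom_lin_def by auto
    moreover have "csmul scale B1 r (inv_into H1 \<phi> X) \<in> H1" using c2 inv_in X by blast
    ultimately show "inv_into H1 \<phi> (csmul scale B2 r X) = csmul scale B1 r (inv_into H1 \<phi> X)"
      using e by blast
  qed
qed

lemma inc_iso:
  assumes bcX: "bc scale L F Fr num X J" and YX: "Y \<subseteq> X"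
    and hyp: "\<forall>x\<in>X - Y. \<exists>y\<in>Y. \<forall>T. T \<subseteq> X \<longrightarrow> x \<in> T \<longrightarrow> J (insert y T) = J T"
  shows "hom_lin scale (cx.Bs (gch Y J F) (gbd Y J Fr num) k) (cx.Hs (gch Y J F) (gbd Y J Fr num) k)
           (cx.Bs (gch X J F) (gbd X J Fr num) k) (cx.Hs (gch X J F) (gbd X J Fr num) k)
           (hmap (cx.cs (gch X J F) (gbd X J Fr num) k) id)"
    and "bij_betw (hmap (cx.cs (gch X J F) (gbd X J Fr num) k) id)
           (cx.Hs (gch Y J F) (gbd Y J Fr num) k) (cx.Hs (gch X J F) (gbd X J Fr num) k)"
    and "hmap (cx.cs (gch X J F) (gbd X J Fr num) k) id (cx.Bs (gch Y J F) (gbd Y J Fr num) k)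
           = cx.Bs (gch X J F) (gbd X J Fr num) k"
proof -
  interpret X: bc scale L F Fr num X J by (rule bcX)
  interpret Y: bc scale L F Fr num Y J by (rule X.bc_sub[OF YX])
  have ZYX: "Y.Zs k \<subseteq> X.Zs k" using X.Zs_sub[OF YX] .
  have BYX: "Y.Bs k \<subseteq> X.Bs k" using X.Bs_sub[OF YX] .
  have q: "\<forall>z\<in>X.Zs k. \<exists>z'\<in>Y.Zs k. z - z' \<in> X.Bs k" "\<forall>z\<in>Y.Zs k. z \<in> X.Bs k \<longrightarrow> z \<in> Y.Bs k"
    using qi[OF bcX YX hyp, of k] by auto
  have hl: "hom_lin scale (Y.Bs k) (Y.Hs k) (X.Bs k) (X.Hs k) (hmap (X.cs k) id)"
    and ev: "\<And>z. z \<in> Y.Zs k \<Longrightarrow> hmap (X.cs k) id (Y.cs k z) = X.cs k z"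
    using hmap_lin[OF Y.cx X.cx, of k id k] ZYX BYX by auto
  show "hom_lin scale (Y.Bs k) (Y.Hs k) (X.Bs k) (X.Hs k) (hmap (X.cs k) id)" by (rule hl)
  show "hmap (X.cs k) id (Y.Bs k) = X.Bs k"
    using ev[OF Y.Zs_zero] Y.Bs_cs X.Bs_cs by simp
  show "bij_betw (hmap (X.cs k) id) (Y.Hs k) (X.Hs k)"
    unfolding bij_betw_def
  proof
    show "inj_on (hmap (X.cs k) id) (Y.Hs k)"
    proof (rule inj_onI)
      fix A B assume A: "A \<in> Y.Hs k" and B: "B \<in> Y.Hs k" and e: "hmap (X.cs k) id A = hmap (X.cs k) id B"
      obtain z1 where z1: "z1 \<in> Y.Zs k" "A = Y.cs k z1" using A by (auto simp: Y.Hs_def)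
      obtain z2 where z2: "z2 \<in> Y.Zs k" "B = Y.cs k z2" using B by (auto simp: Y.Hs_def)
      have "X.cs k z1 = X.cs k z2" using e ev z1 z2 by simp
      then have "z1 - z2 \<in> X.Bs k" by (rule X.cs_eqD)
      moreover have "z1 - z2 \<in> Y.Zs k" using Y.Zs_diff z1 z2 by blast
      ultimately have "z1 - z2 \<in> Y.Bs k" using q(2) by blast
      then show "A = B" using z1 z2 Y.cs_eqI by simp
    qed
  next
    show "hmap (X.cs k) id ` Y.Hs k = X.Hs k"
    proof (intro set_eqI iffI)
      fix W assume "W \<in> hmap (X.cs k) id ` Y.Hs k"
      then show "W \<in> X.Hs k" using hl unfolding hom_lin_def by blast
    next
      fix W assume "W \<in> X.Hs k"
      then obtain z where z: "z \<in> X.Zs k" "W = X.cs k z" by (auto simp: X.Hs_def)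
      obtain z' where z': "z' \<in> Y.Zs k" "z - z' \<in> X.Bs k" using q(1) z by blast
      have "hmap (X.cs k) id (Y.cs k z') = W" using ev[OF z'(1)] z X.cs_eqI[OF z'(2)] by simp
      then show "W \<in> hmap (X.cs k) id ` Y.Hs k" using z' Y.cs_in_Hs by blast
    qed
  qed
qed

definition ca :: "('a \<Rightarrow> nat) \<Rightarrow> 'a \<Rightarrow> 'a set \<Rightarrow> nat" where
  "ca num a T = card {t \<in> T. num a < num t}"

lemma ca_insert: "finite T \<Longrightarrow> b \<notin> T \<Longrightarrow>
   ca num a (insert b T) = ca num a T + (if num a < num b then 1 else 0)"
proof -
  assume f: "finite T" and n: "b \<notin> T"
  show ?thesis
  proof (cases "num a < num b")
    case True
    then have "{t \<in> insert b T. num a < num t} = insert b {t \<in> T. num a < num t}" by auto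
    then show ?thesis using True f n by (simp add: ca_def)
  next
    case False
    then have "{t \<in> insert b T. num a < num t} = {t \<in> T. num a < num t}" by auto
    then show ?thesis using False by (simp add: ca_def)
  qed
qed

lemma sg_eq0: "sg n v = 0 \<Longrightarrow> v = (0::'m::ab_group_add)"
  by (simp add: sg_def split: if_splits)

lemma gchI: "(\<And>S. S \<subseteq> Y \<Longrightarrow> int (card S) = k \<Longrightarrow> c S \<in> F (J S)) \<Longrightarrow>
   (\<And>S. \<not> (S \<subseteq> Y \<and> int (card S) = k) \<Longrightarrow> c S = 0) \<Longrightarrow> c \<in> gch Y J F k"
  unfolding gch_def by blast

context bc
begin

definition pp where
  "pp a c = (\<lambda>T. if T \<subseteq> X - {a} then sg (ca num a T) (c (insert a T)) else 0)"

definition qq where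
  "qq a w = (\<lambda>S. if a \<in> S \<and> S \<subseteq> X then sg (ca num a (S - {a})) (w (S - {a})) else 0)"

lemma bcK: "a \<in> X \<Longrightarrow> bc scale L F Fr num (X - {a}) (\<lambda>T. J (insert a T))"
  by (rule bc.intro[OF md sh]) (auto intro: inj_on_subset[OF inj] finite_subset[OF _ finX] J_in J_mono)

lemma ses_inst: assumes aX: "a \<in> X"
  shows "ses scale (gch (X - {a}) J F) (gbd (X - {a}) J Fr num) Ch D
     (gch (X - {a}) (\<lambda>T. J (insert a T)) F) (gbd (X - {a}) (\<lambda>T. J (insert a T)) Fr num) (pp a) (qq a)"
proof -
  interpret K: bc scale L F Fr num "X - {a}" "\<lambda>T. J (insert a T)" by (rule bcK[OF aX])
  interpret A: bc scale L F Fr num "X - {a}" J by (rule bc_sub) auto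
  have fT: "finite T" if "T \<subseteq> X" for T using finX that finite_subset by auto
  show ?thesis
  proof (rule ses.intro[OF A.cx cx K.cx], rule ses_axioms.intro)
    fix k show "gch (X - {a}) J F k \<subseteq> Ch k" by (rule gch_sub) auto
  next
    fix x k assume "x \<in> gch (X - {a}) J F k"
    then show "gbd (X - {a}) J Fr num k x = D k x" using gbd_sub[of "X - {a}"] by auto
  next
    fix x k assume x: "x \<in> Ch k"
    show "pp a x \<in> gch (X - {a}) (\<lambda>T. J (insert a T)) F (k - 1)"
    proof (rule gchI)
      fix T assume T: "T \<subseteq> X - {a}" "int (card T) = k - 1"
      have "x (insert a T) \<in> F (J (insert a T))" using T aX by (intro ch_val[OF x]) auto
      then show "pp a x T \<in> F (J (insert a T))"
        using T F_sg[OF md sh] J_in[of "insert a T"] aX by (auto simp: pp_def)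
    next
      fix T assume T: "\<not> (T \<subseteq> X - {a} \<and> int (card T) = k - 1)"
      show "pp a x T = 0"
      proof (cases "T \<subseteq> X - {a}")
        case True
        have "finite T" "a \<notin> T" using True fT[of T] by auto
        then have "card (insert a T) = Suc (card T)" by simp
        then have "\<not> (insert a T \<subseteq> X \<and> int (card (insert a T)) = k)" using T True by auto
        then have "x (insert a T) = 0" by (rule ch_out[OF x])
        then show ?thesis by (simp add: pp_def sg_zero_v)
      next
        case False then show ?thesis by (simp add: pp_def)
      qed
    qed
  next
    fix w k assume w: "w \<in> gch (X - {a}) (\<lambda>T. J (insert a T)) F k"
    show "qq a w \<in> Ch (k + 1)"
    proof (rule chI)
      fix S assume S: "S \<subseteq> X" "int (card S) = k + 1"
      show "qq a w S \<in> F (J S)"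
      proof (cases "a \<in> S")
        case True
        have "w (S - {a}) \<in> F (J (insert a (S - {a})))" using S by (intro K.ch_val[OF w]) auto
        moreover have "insert a (S - {a}) = S" using True by auto
        ultimately show ?thesis using True S F_sg[OF md sh] J_in by (auto simp: qq_def)
      next
        case False then show ?thesis using F_zero[OF md sh] J_in S by (simp add: qq_def)
      qed
    next
      fix S assume S: "\<not> (S \<subseteq> X \<and> int (card S) = k + 1)"
      show "qq a w S = 0"
      proof (cases "a \<in> S \<and> S \<subseteq> X")
        case True
        then have "card S = Suc (card (S - {a}))" using fT[of S] card.remove[of S a] by auto
        then have "\<not> (S - {a} \<subseteq> X - {a} \<and> int (card (S - {a})) = k)" using S True by auto
        then have "w (S - {a}) = 0" by (rule gch_out[OF w])
        then show ?thesis by (simp add: qq_def sg_zero_v)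
      next
        case False then show ?thesis by (auto simp: qq_def)
      qed
    qed
  next
    fix w k assume w: "w \<in> gch (X - {a}) (\<lambda>T. J (insert a T)) F k"
    show "pp a (qq a w) = w"
    proof (rule ext)
      fix T show "pp a (qq a w) T = w T"
      proof (cases "T \<subseteq> X - {a}")
        case True
        then have "a \<notin> T" "insert a T \<subseteq> X" using aX by auto
        then have "qq a w (insert a T) = sg (ca num a T) (w T)" by (simp add: qq_def)
        then show ?thesis using True by (simp add: pp_def sg_sg)
      next
        case False
        then have "\<not> (T \<subseteq> X - {a} \<and> int (card T) = k)" by blast
        then have "w T = 0" by (rule gch_out[OF w])
        then show ?thesis using False by (simp add: pp_def)
      qed
    qed
  next
    fix x y show "pp a (x + y) = pp a x + pp a y" by (auto simp: pp_def fun_eq_iff sg_add_v)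
  next
    fix x y show "qq a (x + y) = qq a x + qq a y" by (auto simp: qq_def fun_eq_iff sg_add_v)
  next
    fix r x show "pp a (smf scale r x) = smf scale r (pp a x)"
      by (auto simp: pp_def fun_eq_iff smf_def sg_def module.scale_minus_right[OF md] module.scale_zero_right[OF md])
  next
    fix r x show "qq a (smf scale r x) = smf scale r (qq a x)"
      by (auto simp: qq_def fun_eq_iff smf_def sg_def module.scale_minus_right[OF md] module.scale_zero_right[OF md])
  next
    fix x k assume x: "x \<in> Ch k"
    show "pp a (D k x) = gbd (X - {a}) (\<lambda>T. J (insert a T)) Fr num (k - 1) (pp a x)"
    proof (rule ext)
      fix T
      show "pp a (D k x) T = gbd (X - {a}) (\<lambda>T. J (insert a T)) Fr num (k - 1) (pp a x) T"
      proof (cases "T \<subseteq> X - {a} \<and> int (card T) = k - 1 - 1")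
        case True
        have aT: "a \<notin> T" "insert a T \<subseteq> X" "finite T" using True aX fT[of T] by auto
        have cT: "int (card (insert a T)) = k - 1" using True aT by simp
        have XT: "X - insert a T = (X - {a}) - T" by auto
        have "pp a (D k x) T = sg (ca num a T) (D k x (insert a T))" using True by (simp add: pp_def)
        also have "D k x (insert a T) = (\<Sum>b\<in>(X - {a}) - T. sgn_term num (insert a T) b
            (Fr (J (insert b (insert a T))) (J (insert a T)) (x (insert b (insert a T)))))"
          using aT cT XT by (simp add: gbd_def)
        finally have L: "pp a (D k x) T = (\<Sum>b\<in>(X - {a}) - T. sg (ca num a T) (sgn_term num (insert a T) b
            (Fr (J (insert b (insert a T))) (J (insert a T)) (x (insert b (insert a T))))))"
          by (simp add: sg_sum)
        have R: "gbd (X - {a}) (\<lambda>T. J (insert a T)) Fr num (k - 1) (pp a x) T =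
          (\<Sum>b\<in>(X - {a}) - T. sgn_term num T b (Fr (J (insert a (insert b T))) (J (insert a T)) (pp a x (insert b T))))"
          using True by (simp add: gbd_def)
        show ?thesis
          unfolding L R
        proof (rule sum.cong[OF refl])
          fix b assume b: "b \<in> X - {a} - T"
          have bT: "b \<notin> T" "insert b T \<subseteq> X - {a}" using b True by auto
          have ppx: "pp a x (insert b T) = sg (ca num a (insert b T)) (x (insert a (insert b T)))"
            using bT by (simp add: pp_def)
          have inL: "J (insert a T) \<in> L" "J (insert a (insert b T)) \<in> L" using aT b by (auto intro!: J_in)
          have le: "J (insert a T) \<le> J (insert a (insert b T))" using aT b by (intro J_mono) auto
          have xv: "x (insert a (insert b T)) \<in> F (J (insert a (insert b T)))" using aT b by (intro ch_val[OF x]) auto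
          have c1: "cnt num (insert a T) b = cnt num T b + (if num a < num b then 1 else 0)"
            using cnt_insert[OF aT(3) aT(1)] .
          have c2: "ca num a (insert b T) = ca num a T + (if num a < num b then 1 else 0)"
            using ca_insert[OF aT(3) bT(1)] .
          show "sg (ca num a T) (sgn_term num (insert a T) b
            (Fr (J (insert b (insert a T))) (J (insert a T)) (x (insert b (insert a T))))) =
            sgn_term num T b (Fr (J (insert a (insert b T))) (J (insert a T)) (pp a x (insert b T)))"
            unfolding ppx sgn_term_sg Fr_sg[OF md sh inL le xv] c1 c2
            by (simp add: insert_commute sg_plus[symmetric] add_ac)
        qed
      next
        case False
        have "gbd (X - {a}) (\<lambda>T. J (insert a T)) Fr num (k - 1) (pp a x) T = 0"
          unfolding gbd_def by (simp only: False if_False)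
        moreover have "pp a (D k x) T = 0"
        proof (cases "T \<subseteq> X - {a}")
          case True
          then have "a \<notin> T" "finite T" using fT[of T] by auto
          then have "card (insert a T) = Suc (card T)" by simp
          then have "\<not> (insert a T \<subseteq> X \<and> int (card (insert a T)) = k - 1)" using False True by auto
          then have "D k x (insert a T) = 0" unfolding gbd_def by (simp only: if_False)
          then show ?thesis using True by (simp add: pp_def sg_zero_v)
        next
          case F2: False then show ?thesis by (simp add: pp_def)
        qed
        ultimately show ?thesis by simp
      qed
    qed
  next
    fix x k assume x: "x \<in> Ch k"
    show "pp a x = 0 \<longleftrightarrow> x \<in> gch (X - {a}) J F k"
    proof
      assume p0: "pp a x = 0"
      have "x T = 0" if aT: "a \<in> T" for T
      proof (cases "T \<subseteq> X")
        case True
        then have "T - {a} \<subseteq> X - {a}" by auto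
        then have "sg (ca num a (T - {a})) (x (insert a (T - {a}))) = 0"
          using fun_cong[OF p0, of "T - {a}"] by (simp add: pp_def)
        then have "x (insert a (T - {a})) = 0" by (rule sg_eq0)
        moreover have "insert a (T - {a}) = T" using aT by auto
        ultimately show ?thesis by simp
      next
        case False then show ?thesis using ch_out[OF x] by blast
      qed
      then show "x \<in> gch (X - {a}) J F k" using gch_Y_iff[OF aX] x by blast
    next
      assume "x \<in> gch (X - {a}) J F k"
      then have "\<forall>T. a \<in> T \<longrightarrow> x T = 0" using gch_Y_iff[OF aX] by blast
      then show "pp a x = 0" by (auto simp: pp_def fun_eq_iff sg_zero_v)
    qed
  qed
qed

end

lemma lub_unique: "lub_in M S x \<Longrightarrow> lub_in M S y \<Longrightarrow> x = y"
  unfolding lub_in_def by (meson order_antisym)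

lemma bjoin_eq: "lub_in M S x \<Longrightarrow> bjoin M S = x"
  unfolding bjoin_def using lub_unique by blast

lemma glb_ex_ne: assumes lat: "lattice_on L" and S: "S \<subseteq> L" "S \<noteq> {}" shows "\<exists>g. glb_in L S g"
proof -
  have fin: "finite S" using lat S finite_subset unfolding lattice_on_def by blast
  show ?thesis using fin S(2) S(1)
  proof (induction S rule: finite_ne_induct)
    case (singleton s) then show ?case by (intro exI[of _ s]) (auto simp: glb_in_def)
  next
    case (insert s S)
    obtain g where g: "glb_in L S g" using insert by auto
    have "s \<in> L" "g \<in> L" using insert g by (auto simp: glb_in_def)
    then obtain h where h: "glb_in L {s, g} h" using lat unfolding lattice_on_def by blast
    have "glb_in L (insert s S) h" using g h unfolding glb_in_def by (auto intro: order_trans)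
    then show ?case by blast
  qed
qed

lemma lub_ex: assumes lat: "lattice_on L" and S: "S \<subseteq> L" shows "\<exists>x. lub_in L S x"
proof (cases "S = {}")
  case True
  have "L \<noteq> {}" using lat by (simp add: lattice_on_def)
  then obtain g where g: "glb_in L L g" using glb_ex_ne[OF lat] by blast
  then have "lub_in L {} g" by (auto simp: glb_in_def lub_in_def)
  then show ?thesis using True by blast
next
  case False
  have fin: "finite S" using lat S finite_subset unfolding lattice_on_def by blast
  show ?thesis using fin False S
  proof (induction S rule: finite_ne_induct)
    case (singleton s) then show ?case by (intro exI[of _ s]) (auto simp: lub_in_def)
  next
    case (insert s S)
    obtain g where g: "lub_in L S g" using insert by auto
    have "s \<in> L" "g \<in> L" using insert g by (auto simp: lub_in_def)
    then obtain h where h: "lub_in L {s, g} h" using lat unfolding lattice_on_def by blast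
    have "lub_in L (insert s S) h" using g h unfolding lub_in_def by (auto intro: order_trans)
    then show ?case by blast
  qed
qed

lemma bjoin_lub: "lattice_on L \<Longrightarrow> S \<subseteq> L \<Longrightarrow> lub_in L S (bjoin L S)"
  using lub_ex bjoin_eq by metis

lemma bjoin_in: "lattice_on L \<Longrightarrow> S \<subseteq> L \<Longrightarrow> bjoin L S \<in> L"
  using bjoin_lub by (auto simp: lub_in_def)

lemma bjoin_upper: "lattice_on L \<Longrightarrow> S \<subseteq> L \<Longrightarrow> s \<in> S \<Longrightarrow> s \<le> bjoin L S"
  using bjoin_lub by (auto simp: lub_in_def)

lemma bjoin_least: "lattice_on L \<Longrightarrow> S \<subseteq> L \<Longrightarrow> u \<in> L \<Longrightarrow> (\<And>s. s \<in> S \<Longrightarrow> s \<le> u) \<Longrightarrow> bjoin L S \<le> u"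
proof -
  assume a: "lattice_on L" "S \<subseteq> L" "u \<in> L" "\<And>s. s \<in> S \<Longrightarrow> s \<le> u"
  have "lub_in L S (bjoin L S)" using bjoin_lub[OF a(1,2)] .
  then have "\<forall>y\<in>L. (\<forall>s\<in>S. s \<le> y) \<longrightarrow> bjoin L S \<le> y" by (simp add: lub_in_def)
  then show ?thesis using a(3,4) by blast
qed

lemma bjoin_mono: "lattice_on L \<Longrightarrow> T \<subseteq> L \<Longrightarrow> S \<subseteq> T \<Longrightarrow> bjoin L S \<le> bjoin L T"
  by (rule bjoin_least) (auto intro: bjoin_in bjoin_upper)

lemma bjoin_absorb: assumes "lattice_on L" "S \<subseteq> L" "y \<in> L" "y \<le> bjoin L S"
  shows "bjoin L (insert y S) = bjoin L S"
proof (rule order_antisym)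
  show "bjoin L (insert y S) \<le> bjoin L S"
    using assms by (intro bjoin_least) (auto intro: bjoin_in bjoin_upper)
  show "bjoin L S \<le> bjoin L (insert y S)"
    using assms by (intro bjoin_mono) auto
qed

lemma bot_le: "lattice_on L \<Longrightarrow> y \<in> L \<Longrightarrow> bjoin L {} \<le> y"
  by (rule bjoin_least) auto

lemma bot_in: "lattice_on L \<Longrightarrow> bjoin L {} \<in> L"
  by (rule bjoin_in) auto

lemma atoms_sub: "atoms M \<subseteq> M" by (auto simp: atoms_def)

lemma atom_cov: "a \<in> atoms M \<Longrightarrow> covers_in M (bjoin M {}) a" by (auto simp: atoms_def)

section \<open>Deletion and restriction\<close>

lemma del_join: assumes lat: "lattice_on L" and S: "S \<subseteq> atoms L - {a}"
  shows "bjoin (deletion L a) S = bjoin L S"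
proof (rule bjoin_eq)
  have SL: "S \<subseteq> L" using S atoms_sub by blast
  have "bjoin L S \<in> deletion L a" unfolding deletion_def using bjoin_lub[OF lat SL] bjoin_in[OF lat SL] S by blast
  then show "lub_in (deletion L a) S (bjoin L S)"
    using bjoin_lub[OF lat SL] by (auto simp: lub_in_def deletion_def)
qed

lemma del_atoms: assumes lat: "lattice_on L" and a: "a \<in> atoms L"
  shows "atoms (deletion L a) = atoms L - {a}"
proof -
  let ?D = "deletion L a"
  let ?z = "bjoin L {}"
  have bz: "bjoin ?D {} = ?z" using del_join[OF lat, of "{}"] by simp
  have DL: "?D \<subseteq> L" by (auto simp: deletion_def)
  show ?thesis
  proof (intro set_eqI iffI)
    fix x assume "x \<in> atoms ?D"
    then have c: "covers_in ?D ?z x" using bz by (simp add: atoms_def)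
    then have xD: "x \<in> ?D" and zx: "?z < x" by (auto simp: covers_in_def)
    obtain S where S: "S \<subseteq> atoms L - {a}" "lub_in L S x" using xD by (auto simp: deletion_def)
    have "S \<noteq> {}"
    proof
      assume "S = {}"
      then have "x = ?z" using S(2) bjoin_eq by metis
      then show False using zx by simp
    qed
    then obtain b where b: "b \<in> S" by blast
    have bA: "b \<in> atoms L" "b \<noteq> a" using S b by auto
    have bx: "b \<le> x" using S(2) b by (auto simp: lub_in_def)
    have bD: "b \<in> ?D" using del_join[OF lat, of "{b}"] bA
      unfolding deletion_def using atoms_sub[of L]
      by (intro CollectI conjI exI[of _ "{b}"]) (auto simp: lub_in_def)
    have zb: "?z < b" using atom_cov[OF bA(1)] by (auto simp: covers_in_def)
    have "\<not> (b < x)" using c bD zb unfolding covers_in_def by blast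
    then have "b = x" using bx by (simp add: less_le)
    then show "x \<in> atoms L - {a}" using bA by simp
  next
    fix x assume x: "x \<in> atoms L - {a}"
    have xL: "x \<in> L" using x atoms_sub by blast
    have xD: "x \<in> ?D" unfolding deletion_def using x xL
      by (intro CollectI conjI exI[of _ "{x}"]) (auto simp: lub_in_def)
    have "covers_in L ?z x" using x atom_cov by auto
    then have c1: "?z < x" "\<not> (\<exists>w\<in>L. ?z < w \<and> w < x)" by (simp_all add: covers_in_def)
    have zD: "?z \<in> ?D" unfolding deletion_def using bjoin_lub[OF lat, of "{}"] bot_in[OF lat] by blast
    have "covers_in ?D ?z x" unfolding covers_in_def using c1 xD zD DL by blast
    then show "x \<in> atoms ?D" using xD bz by (simp add: atoms_def)
  qed
qed

lemma res_join: assumes lat: "lattice_on L" and aL: "a \<in> L" and U: "U \<subseteq> restriction L a"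
  shows "bjoin (restriction L a) U = bjoin L (insert a U)"
proof (rule bjoin_eq)
  have UL: "insert a U \<subseteq> L" using U aL by (auto simp: restriction_def)
  have "a \<le> bjoin L (insert a U)" using bjoin_upper[OF lat UL] by simp
  then have "bjoin L (insert a U) \<in> restriction L a" using bjoin_in[OF lat UL] by (simp add: restriction_def)
  moreover have "bjoin L (insert a U) \<le> y" if "y \<in> restriction L a" "\<forall>s\<in>U. s \<le> y" for y
    using that by (intro bjoin_least[OF lat UL]) (auto simp: restriction_def)
  ultimately show "lub_in (restriction L a) U (bjoin L (insert a U))"
    using bjoin_upper[OF lat UL] by (auto simp: lub_in_def)
qed

lemma res_atoms: assumes lat: "lattice_on L" and aL: "a \<in> L"
  shows "atoms (restriction L a) = {x. covers_in L a x}"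
proof -
  let ?R = "restriction L a"
  have "lub_in ?R {} a" using aL by (auto simp: lub_in_def restriction_def)
  then have bz: "bjoin ?R {} = a" by (rule bjoin_eq)
  show ?thesis
  proof (intro set_eqI iffI)
    fix x assume "x \<in> atoms ?R"
    then have x: "x \<in> ?R" "covers_in ?R a x" using bz by (auto simp: atoms_def)
    have xL: "x \<in> L" "a < x" using x by (auto simp: restriction_def covers_in_def)
    have "\<not> (\<exists>z\<in>L. a < z \<and> z < x)"
    proof
      assume "\<exists>z\<in>L. a < z \<and> z < x"
      then obtain z where z: "z \<in> L" "a < z" "z < x" by blast
      then have "z \<in> ?R" by (simp add: restriction_def)
      then show False using x(2) z unfolding covers_in_def by blast
    qed
    then show "x \<in> {x. covers_in L a x}" using xL aL by (simp add: covers_in_def)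
  next
    fix x assume "x \<in> {x. covers_in L a x}"
    then have x: "covers_in L a x" by simp
    then have xR: "x \<in> ?R" by (simp add: covers_in_def restriction_def less_imp_le)
    have aR: "a \<in> ?R" using aL by (simp add: restriction_def)
    have "covers_in ?R a x" using x xR aR unfolding covers_in_def restriction_def by blast
    then show "x \<in> atoms ?R" using xR bz by (simp add: atoms_def)
  qed
qed

lemma rk_strict:
  assumes lat: "lattice_on L" and cov: "\<forall>x y. covers_in L x y \<longrightarrow> rk y = rk x + (1::nat)"
  shows "x \<in> L \<Longrightarrow> y \<in> L \<Longrightarrow> x < y \<Longrightarrow> rk x < rk y"
proof (induction "card {w \<in> L. x < w \<and> w \<le> y}" arbitrary: x rule: less_induct)
  case less
  have finL: "finite L" using lat by (simp add: lattice_on_def)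
  have fW: "finite {w \<in> L. x < w \<and> w \<le> y}" using finL by simp
  have "y \<in> {w \<in> L. x < w \<and> w \<le> y}" using less by simp
  then obtain z where z: "z \<in> {w \<in> L. x < w \<and> w \<le> y}" "z \<le> y"
    and zmin: "\<forall>b\<in>{w \<in> L. x < w \<and> w \<le> y}. b \<le> z \<longrightarrow> z = b"
    using finite_has_minimal2[OF fW] by blast
  have cz: "covers_in L x z"
    unfolding covers_in_def using z zmin less.prems by (auto intro: order.strict_trans2)
  then have rz: "rk z = rk x + 1" using cov by blast
  show ?case
  proof (cases "z = y")
    case True then show ?thesis using rz by simp
  next
    case False
    then have zy: "z < y" using z by auto
    have sub: "{w \<in> L. z < w \<and> w \<le> y} \<subset> {w \<in> L. x < w \<and> w \<le> y}"
      using z by (auto intro: order.strict_trans)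
    have "card {w \<in> L. z < w \<and> w \<le> y} < card {w \<in> L. x < w \<and> w \<le> y}"
      using psubset_card_mono[OF fW sub] .
    then have "rk z < rk y" using less.hyps z less.prems zy by blast
    then show ?thesis using rz by simp
  qed
qed

lemma geo_facts:
  assumes geo: "geometric_lattice L" and a: "a \<in> atoms L"
  shows "lattice_on L"
    and "\<And>b. b \<in> atoms L \<Longrightarrow> b \<noteq> a \<Longrightarrow> covers_in L a (bjoin L {a, b})"
    and "\<And>l. covers_in L a l \<Longrightarrow> \<exists>b\<in>atoms L - {a}. bjoin L {a, b} = l"
proof -
  show lat: "lattice_on L" using geo by (simp add: geometric_lattice_def)
  obtain rk :: "_ \<Rightarrow> nat" where rk0: "rk (bjoin L {}) = 0"
    and cov: "\<forall>x y. covers_in L x y \<longrightarrow> rk y = rk x + 1"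
    and sm: "\<forall>x\<in>L. \<forall>y\<in>L. rk (bjoin L {x, y}) + rk (bmeet L {x, y}) \<le> rk x + rk y"
    using geo unfolding geometric_lattice_def by blast
  have atomic: "\<forall>x\<in>L. \<exists>S\<subseteq>atoms L. lub_in L S x" using geo by (simp add: geometric_lattice_def)
  let ?z = "bjoin L {}"
  have aL: "a \<in> L" using a atoms_sub by blast
  have lt: "a < bjoin L {a, b}" and le2: "b \<le> bjoin L {a, b}" and jL: "bjoin L {a, b} \<in> L"
    if b: "b \<in> atoms L" "b \<noteq> a" for b
  proof -
    have bL: "b \<in> L" using b atoms_sub by blast
    have ab: "{a, b} \<subseteq> L" using aL bL by auto
    show "b \<le> bjoin L {a, b}" using bjoin_upper[OF lat ab] by simp
    show jL: "bjoin L {a, b} \<in> L" using bjoin_in[OF lat ab] .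
    have "a \<le> bjoin L {a, b}" using bjoin_upper[OF lat ab] by simp
    moreover have "a \<noteq> bjoin L {a, b}"
    proof
      assume e: "a = bjoin L {a, b}"
      then have "b \<le> a" using bjoin_upper[OF lat ab] by simp
      moreover have "?z < b" using atom_cov[OF b(1)] by (auto simp: covers_in_def)
      ultimately have "b = a" using atom_cov[OF a] bL unfolding covers_in_def
        by (auto simp: order.order_iff_strict)
      then show False using b by simp
    qed
    ultimately show "a < bjoin L {a, b}" by simp
  qed
  show "covers_in L a (bjoin L {a, b})" if b: "b \<in> atoms L" "b \<noteq> a" for b
  proof -
    have bL: "b \<in> L" using b atoms_sub by blast
    have ra: "rk a = 1" using cov atom_cov[OF a] rk0 by auto
    have rb: "rk b = 1" using cov atom_cov[OF b(1)] rk0 by auto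
    have "rk (bjoin L {a, b}) \<le> 2" using sm aL bL ra rb by fastforce
    moreover have False if "w \<in> L" "a < w" "w < bjoin L {a, b}" for w
    proof -
      have "rk a < rk w" "rk w < rk (bjoin L {a, b})"
        using rk_strict[OF lat cov] that aL jL[OF b] by auto
      then show False using ra \<open>rk (bjoin L {a, b}) \<le> 2\<close> by simp
    qed
    ultimately show ?thesis using lt[OF b] aL jL[OF b] unfolding covers_in_def by blast
  qed
  show "\<exists>b\<in>atoms L - {a}. bjoin L {a, b} = l" if l: "covers_in L a l" for l
  proof -
    have lL: "l \<in> L" and al: "a < l" using l by (auto simp: covers_in_def)
    obtain S where S: "S \<subseteq> atoms L" "lub_in L S l" using atomic lL by blast
    have "\<exists>b\<in>S. b \<noteq> a"
    proof (rule ccontr)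
      assume "\<not> (\<exists>b\<in>S. b \<noteq> a)"
      then have "\<forall>s\<in>S. s \<le> a" by auto
      then have "l \<le> a" using S(2) aL by (auto simp: lub_in_def)
      then show False using al by simp
    qed
    then obtain b where b: "b \<in> S" "b \<noteq> a" by blast
    have bA: "b \<in> atoms L" using S b by blast
    have bl: "b \<le> l" using S(2) b by (auto simp: lub_in_def)
    have bL: "b \<in> L" using bA atoms_sub by blast
    have "bjoin L {a, b} \<le> l" using al bl aL bL lL by (intro bjoin_least[OF lat]) auto
    moreover have "a < bjoin L {a, b}" using lt[OF bA b(2)] .
    ultimately have "bjoin L {a, b} = l" using l jL[OF bA b(2)] unfolding covers_in_def
      by (auto simp: order.order_iff_strict)
    then show ?thesis using bA b by blast
  qed
qed

lemma HC_Hs: assumes c: "cx scale (chains M F) (bd M Fr num)"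
  shows "HC M F Fr num k = cx.Hs (chains M F) (bd M Fr num) k"
    and "boundaries M F Fr num k = cx.Bs (chains M F) (bd M Fr num) k"
proof -
  interpret cx scale "chains M F" "bd M Fr num" by (rule c)
  show "boundaries M F Fr num k = Bs k" by (simp add: boundaries_def Bs_def)
  show "HC M F Fr num k = Hs k"
    by (simp add: HC_def Hs_def cs_def Zs_def Bs_def cycles_def boundaries_def plus_fun_def zero_fun_def)
qed

theorem theorem7:
  fixes L :: "'a::order set" and a :: 'a
    and scale :: "'r::comm_ring_1 \<Rightarrow> 'm::ab_group_add \<Rightarrow> 'm"
    and F :: "'a \<Rightarrow> 'm set" and Fr :: "'a \<Rightarrow> 'a \<Rightarrow> 'm \<Rightarrow> 'm"
    and num :: "'a \<Rightarrow> nat"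
  assumes "geometric_lattice L"
    and "module scale"
    and "sheaf_on scale L F Fr"
    and "inj_on num L"
    and "a \<in> atoms L"
  shows "\<exists>\<alpha> \<beta> \<delta>. \<forall>i::int.
    hom_lin scale (boundaries (restriction L a) F Fr num i) (HC (restriction L a) F Fr num i)
                  (boundaries (deletion L a) F Fr num i) (HC (deletion L a) F Fr num i) (\<alpha> i) \<and>
    hom_lin scale (boundaries (deletion L a) F Fr num i) (HC (deletion L a) F Fr num i)
                  (boundaries L F Fr num i) (HC L F Fr num i) (\<beta> i) \<and>
    hom_lin scale (boundaries L F Fr num i) (HC L F Fr num i)
                  (boundaries (restriction L a) F Fr num (i - 1)) (HC (restriction L a) F Fr num (i - 1)) (\<delta> i) \<and>
    exact_at (HC (restriction L a) F Fr num i) (\<alpha> i) (HC (deletion L a) F Fr num i) (\<beta> i)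
             (boundaries L F Fr num i) \<and>
    exact_at (HC (deletion L a) F Fr num i) (\<beta> i) (HC L F Fr num i) (\<delta> i)
             (boundaries (restriction L a) F Fr num (i - 1)) \<and>
    exact_at (HC L F Fr num i) (\<delta> i) (HC (restriction L a) F Fr num (i - 1)) (\<alpha> (i - 1))
             (boundaries (deletion L a) F Fr num (i - 1))"
proof -
  note geo = assms(1) and md = assms(2) and sh = assms(3) and inj = assms(4) and aA = assms(5)
  have lat: "lattice_on L" using geo_facts(1)[OF geo aA] .
  have finL: "finite L" using lat by (simp add: lattice_on_def)
  define X where "X = atoms L"
  define X' where "X' = X - {a}"
  define Lam where "Lam = {x. covers_in L a x}"
  define J2 where "J2 = (\<lambda>T. bjoin L (insert a T))"
  have XL: "X \<subseteq> L" using atoms_sub by (simp add: X_def)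
  have aX: "a \<in> X" using aA by (simp add: X_def)
  have aL: "a \<in> L" using aX XL by blast
  have LamL: "Lam \<subseteq> L" by (auto simp: Lam_def covers_in_def)
  have bcL: "bc scale L F Fr num X (bjoin L)"
    by (rule bc.intro[OF md sh]) (use XL finL inj in \<open>auto intro: inj_on_subset finite_subset bjoin_in[OF lat] bjoin_mono[OF lat]\<close>)
  interpret bL: bc scale L F Fr num X "bjoin L" by (rule bcL)
  interpret S: ses scale "gch X' (bjoin L) F" "gbd X' (bjoin L) Fr num" "gch X (bjoin L) F" "gbd X (bjoin L) Fr num"
    "gch X' J2 F" "gbd X' J2 Fr num" "bL.pp a" "bL.qq a"
    using bL.ses_inst[OF aX] unfolding X'_def J2_def .
  have NL: "X' \<union> Lam \<subseteq> L" using XL LamL by (auto simp: X'_def)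
  have bcN: "bc scale L F Fr num (X' \<union> Lam) J2"
  proof (rule bc.intro[OF md sh])
    show "inj_on num (X' \<union> Lam)" using inj NL by (rule inj_on_subset)
    show "finite (X' \<union> Lam)" using finL NL by (rule finite_subset[rotated])
    fix S T
    show "S \<subseteq> X' \<union> Lam \<Longrightarrow> J2 S \<in> L" unfolding J2_def using NL aL by (intro bjoin_in[OF lat]) auto
    show "S \<subseteq> T \<Longrightarrow> T \<subseteq> X' \<union> Lam \<Longrightarrow> J2 S \<le> J2 T" unfolding J2_def using NL aL
      by (intro bjoin_mono[OF lat]) auto
  qed
  interpret bN: bc scale L F Fr num "X' \<union> Lam" J2 by (rule bcN)
  interpret bK: bc scale L F Fr num X' J2 by (rule bN.bc_sub) auto
  interpret bM: bc scale L F Fr num Lam J2 by (rule bN.bc_sub) auto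
  have J2_absorb: "J2 (insert y T) = J2 T" if "T \<subseteq> L" "y \<in> L" "y \<le> J2 T" for y T
  proof -
    have "J2 (insert y T) = bjoin L (insert y (insert a T))" by (simp add: J2_def insert_commute)
    also have "\<dots> = J2 T" unfolding J2_def using that aL by (intro bjoin_absorb[OF lat]) (auto simp: J2_def)
    finally show ?thesis .
  qed
  have hypK: "\<forall>x\<in>(X' \<union> Lam) - X'. \<exists>y\<in>X'. \<forall>T. T \<subseteq> X' \<union> Lam \<longrightarrow> x \<in> T \<longrightarrow> J2 (insert y T) = J2 T"
  proof
    fix x assume x: "x \<in> (X' \<union> Lam) - X'"
    then have "covers_in L a x" unfolding Lam_def by blast
    then obtain b where b: "b \<in> atoms L - {a}" "bjoin L {a, b} = x" using geo_facts(3)[OF geo aA] by blast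
    have bX': "b \<in> X'" using b by (simp add: X'_def X_def)
    have bL: "b \<in> L" using bX' XL by (auto simp: X'_def)
    have "J2 (insert b T) = J2 T" if T: "T \<subseteq> X' \<union> Lam" "x \<in> T" for T
    proof (rule J2_absorb)
      show TL: "T \<subseteq> L" using T NL by blast
      show "b \<in> L" by (rule bL)
      have "b \<le> x" using b(2) bjoin_upper[OF lat, of "{a, b}" b] aL bL by auto
      also have "x \<le> J2 T" unfolding J2_def using T TL aL by (intro bjoin_upper[OF lat]) auto
      finally show "b \<le> J2 T" .
    qed
    then show "\<exists>y\<in>X'. \<forall>T. T \<subseteq> X' \<union> Lam \<longrightarrow> x \<in> T \<longrightarrow> J2 (insert y T) = J2 T" using bX' by blast
  qed
  have hypM: "\<forall>x\<in>(X' \<union> Lam) - Lam. \<exists>y\<in>Lam. \<forall>T. T \<subseteq> X' \<union> Lam \<longrightarrow> x \<in> T \<longrightarrow> J2 (insert y T) = J2 T"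
  proof
    fix x assume x: "x \<in> (X' \<union> Lam) - Lam"
    then have xA: "x \<in> atoms L" "x \<noteq> a" by (auto simp: X'_def X_def)
    have xL: "x \<in> L" using xA atoms_sub by blast
    define y where "y = bjoin L {a, x}"
    have yLam: "y \<in> Lam" using geo_facts(2)[OF geo aA xA] by (simp add: Lam_def y_def)
    have yL: "y \<in> L" using yLam LamL by blast
    have "J2 (insert y T) = J2 T" if T: "T \<subseteq> X' \<union> Lam" "x \<in> T" for T
    proof (rule J2_absorb)
      show TL: "T \<subseteq> L" using T NL by blast
      show "y \<in> L" by (rule yL)
      have JL: "J2 T \<in> L" unfolding J2_def using TL aL by (intro bjoin_in[OF lat]) auto
      have "a \<le> J2 T" "x \<le> J2 T" unfolding J2_def using T TL aL by (auto intro: bjoin_upper[OF lat])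
      then show "y \<le> J2 T" unfolding y_def using aL xL JL by (intro bjoin_least[OF lat]) auto
    qed
    then show "\<exists>y\<in>Lam. \<forall>T. T \<subseteq> X' \<union> Lam \<longrightarrow> x \<in> T \<longrightarrow> J2 (insert y T) = J2 T" using yLam by blast
  qed
  define inc where "inc k = hmap (bN.cs k) id" for k
  have isoK: "hom_lin scale (S.C.Bs k) (S.C.Hs k) (bN.Bs k) (bN.Hs k) (inc k)"
    "bij_betw (inc k) (S.C.Hs k) (bN.Hs k)" "inc k (S.C.Bs k) = bN.Bs k" for k
    using inc_iso[OF bcN _ hypK, of k] by (auto simp: inc_def)
  have isoM: "hom_lin scale (bM.Bs k) (bM.Hs k) (bN.Bs k) (bN.Hs k) (inc k)"
    "bij_betw (inc k) (bM.Hs k) (bN.Hs k)" "inc k (bM.Bs k) = bN.Bs k" for k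
    using inc_iso[OF bcN _ hypM, of k] by (auto simp: inc_def)
  define th where "th k = inv_into (S.C.Hs k) (inc k) \<circ> inc k" for k
  define th' where "th' k = inv_into (bM.Hs k) (inc k) \<circ> inc k" for k
  have th_hom: "hom_lin scale (bM.Bs k) (bM.Hs k) (S.C.Bs k) (S.C.Hs k) (th k)" for k
    unfolding th_def using isoM(1) hom_lin_inv[OF isoK(1,2) S.C.Hs_cadd S.C.Hs_csmul]
    by (rule hom_lin_comp)
  have th'_hom: "hom_lin scale (S.C.Bs k) (S.C.Hs k) (bM.Bs k) (bM.Hs k) (th' k)" for k
    unfolding th'_def using isoK(1) hom_lin_inv[OF isoM(1,2) bM.Hs_cadd bM.Hs_csmul]
    by (rule hom_lin_comp)
  have invK: "inv_into (S.C.Hs k) (inc k) (inc k W) = W" if "W \<in> S.C.Hs k" for W k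
    using isoK(2) that by (simp add: bij_betw_def inv_into_f_f)
  have invM: "inv_into (bM.Hs k) (inc k) (inc k W) = W" if "W \<in> bM.Hs k" for W k
    using isoM(2) that by (simp add: bij_betw_def inv_into_f_f)
  have incM_img: "inc k W \<in> inc k ` S.C.Hs k" if "W \<in> bM.Hs k" for W k
  proof -
    have "inc k W \<in> bN.Hs k" using isoM(2)[of k] that unfolding bij_betw_def by blast
    then show ?thesis using isoK(2)[of k] unfolding bij_betw_def by simp
  qed
  have incK_img: "inc k W \<in> inc k ` bM.Hs k" if "W \<in> S.C.Hs k" for W k
  proof -
    have "inc k W \<in> bN.Hs k" using isoK(2)[of k] that unfolding bij_betw_def by blast
    then show ?thesis using isoM(2)[of k] unfolding bij_betw_def by simp
  qed
  have th'_th: "th' k (th k W) = W" if "W \<in> bM.Hs k" for W k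
  proof -
    have "inc k (inv_into (S.C.Hs k) (inc k) (inc k W)) = inc k W"
      using incM_img[OF that] by (rule f_inv_into_f)
    then show ?thesis using invM[OF that] by (simp add: th_def th'_def)
  qed
  have th_th': "th k (th' k W) = W" if "W \<in> S.C.Hs k" for W k
  proof -
    have "inc k (inv_into (bM.Hs k) (inc k) (inc k W)) = inc k W"
      using incK_img[OF that] by (rule f_inv_into_f)
    then show ?thesis using invK[OF that] by (simp add: th_def th'_def)
  qed
  have th_in: "th k W \<in> S.C.Hs k" if "W \<in> bM.Hs k" for W k
    using th_hom that unfolding hom_lin_def by blast
  have th'_in: "th' k W \<in> bM.Hs k" if "W \<in> S.C.Hs k" for W k
    using th'_hom that unfolding hom_lin_def by blast
  have th_img: "th k ` bM.Hs k = S.C.Hs k" for k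
  proof (intro set_eqI iffI)
    fix W assume "W \<in> th k ` bM.Hs k"
    then show "W \<in> S.C.Hs k" using th_in by blast
  next
    fix W assume W: "W \<in> S.C.Hs k"
    then have "W = th k (th' k W)" using th_th' by simp
    then show "W \<in> th k ` bM.Hs k" using th'_in[OF W] by blast
  qed
  have th'_zero: "th' k (S.C.Bs k) = bM.Bs k" for k
  proof -
    have "inc k (S.C.Bs k) = inc k (bM.Bs k)" using isoK(3) isoM(3) by simp
    then show ?thesis using invM[OF bM.Bs_Hs] by (simp add: th'_def)
  qed
  have th'_inj: "W = S.C.Bs k" if "W \<in> S.C.Hs k" "th' k W = bM.Bs k" for W k
  proof -
    have "th k (th' k W) = th k (th' k (S.C.Bs k))" using that th'_zero by simp
    then show ?thesis using th_th'[OF that(1)] th_th'[OF S.C.Bs_Hs] by simp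
  qed
  have chL: "chains L F = gch X (bjoin L) F" "bd L Fr num = gbd X (bjoin L) Fr num"
    by (simp_all add: chains_gch bd_gbd X_def)
  have chD: "chains (deletion L a) F = gch X' (bjoin L) F" "bd (deletion L a) Fr num = gbd X' (bjoin L) Fr num"
  proof -
    have at: "atoms (deletion L a) = X'" using del_atoms[OF lat aA] by (simp add: X'_def X_def)
    have j: "\<And>S. S \<subseteq> X' \<Longrightarrow> bjoin (deletion L a) S = bjoin L S"
      using del_join[OF lat] by (simp add: X'_def X_def)
    show "chains (deletion L a) F = gch X' (bjoin L) F"
      unfolding chains_gch at by (rule gch_cong) (rule j)
    show "bd (deletion L a) Fr num = gbd X' (bjoin L) Fr num"
      unfolding bd_gbd at by (rule gbd_cong) (rule j)
  qed
  have chR: "chains (restriction L a) F = gch Lam J2 F" "bd (restriction L a) Fr num = gbd Lam J2 Fr num"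
  proof -
    have at: "atoms (restriction L a) = Lam" using res_atoms[OF lat aL] by (simp add: Lam_def)
    have LR: "Lam \<subseteq> restriction L a" by (auto simp: Lam_def restriction_def covers_in_def less_imp_le)
    have j: "\<And>S. S \<subseteq> Lam \<Longrightarrow> bjoin (restriction L a) S = J2 S"
      using res_join[OF lat aL] LR by (auto simp: J2_def)
    show "chains (restriction L a) F = gch Lam J2 F"
      unfolding chains_gch at by (rule gch_cong) (rule j)
    show "bd (restriction L a) Fr num = gbd Lam J2 Fr num"
      unfolding bd_gbd at by (rule gbd_cong) (rule j)
  qed
  have HL: "HC L F Fr num k = bL.Hs k" "boundaries L F Fr num k = bL.Bs k" for k
    using HC_Hs[of scale L F Fr num k] bL.cx unfolding chL by auto
  have HD: "HC (deletion L a) F Fr num k = S.A.Hs k" "boundaries (deletion L a) F Fr num k = S.A.Bs k" for k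
    using HC_Hs[of scale "deletion L a" F Fr num k] S.A.cx_axioms unfolding chD by auto
  have HR: "HC (restriction L a) F Fr num k = bM.Hs k" "boundaries (restriction L a) F Fr num k = bM.Bs k" for k
    using HC_Hs[of scale "restriction L a" F Fr num k] bM.cx unfolding chR by auto
  show ?thesis
    unfolding HL HD HR
  proof (rule exI[of _ "\<lambda>i. S.dH i \<circ> th i"], rule exI[of _ "S.iH"], rule exI[of _ "\<lambda>i. th' (i - 1) \<circ> S.pH i"], intro allI conjI)
    fix i :: int
    show "hom_lin scale (bM.Bs i) (bM.Hs i) (S.A.Bs i) (S.A.Hs i) (S.dH i \<circ> th i)"
      using th_hom S.dH_lin by (rule hom_lin_comp)
    show "hom_lin scale (S.A.Bs i) (S.A.Hs i) (bL.Bs i) (bL.Hs i) (S.iH i)" by (rule S.iH_lin)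
    show "hom_lin scale (bL.Bs i) (bL.Hs i) (bM.Bs (i - 1)) (bM.Hs (i - 1)) (th' (i - 1) \<circ> S.pH i)"
      using S.pH_lin th'_hom by (rule hom_lin_comp)
    show "exact_at (bM.Hs i) (S.dH i \<circ> th i) (S.A.Hs i) (S.iH i) (bL.Bs i)"
      unfolding exact_at_def image_comp[symmetric] th_img using S.exact_A by simp
    show "exact_at (S.A.Hs i) (S.iH i) (bL.Hs i) (th' (i - 1) \<circ> S.pH i) (bM.Bs (i - 1))"
      unfolding exact_at_def S.exact_B
    proof (intro set_eqI iffI)
      fix Y assume "Y \<in> {Y \<in> bL.Hs i. S.pH i Y = S.C.Bs (i - 1)}"
      then show "Y \<in> {Y \<in> bL.Hs i. (th' (i - 1) \<circ> S.pH i) Y = bM.Bs (i - 1)}"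
        using th'_zero by simp
    next
      fix Y assume Y: "Y \<in> {Y \<in> bL.Hs i. (th' (i - 1) \<circ> S.pH i) Y = bM.Bs (i - 1)}"
      have "S.pH i Y \<in> S.C.Hs (i - 1)" using Y S.pH_lin[of i] unfolding hom_lin_def by blast
      then have "S.pH i Y = S.C.Bs (i - 1)" using th'_inj Y by simp
      then show "Y \<in> {Y \<in> bL.Hs i. S.pH i Y = S.C.Bs (i - 1)}" using Y by simp
    qed
    have eC: "S.pH i ` bL.Hs i = {Y \<in> S.C.Hs (i - 1). S.dH (i - 1) Y = S.A.Bs (i - 1)}"
      using S.exact_C[of "i - 1"] by simp
    show "exact_at (bL.Hs i) (th' (i - 1) \<circ> S.pH i) (bM.Hs (i - 1)) (S.dH (i - 1) \<circ> th (i - 1)) (S.A.Bs (i - 1))"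
      unfolding exact_at_def image_comp[symmetric] eC
    proof (intro set_eqI iffI)
      fix W assume "W \<in> th' (i - 1) ` {Y \<in> S.C.Hs (i - 1). S.dH (i - 1) Y = S.A.Bs (i - 1)}"
      then obtain Y where Y: "Y \<in> S.C.Hs (i - 1)" "S.dH (i - 1) Y = S.A.Bs (i - 1)" "W = th' (i - 1) Y" by blast
      then show "W \<in> {W \<in> bM.Hs (i - 1). (S.dH (i - 1) \<circ> th (i - 1)) W = S.A.Bs (i - 1)}"
        using th'_in th_th' by simp
    next
      fix W assume W: "W \<in> {W \<in> bM.Hs (i - 1). (S.dH (i - 1) \<circ> th (i - 1)) W = S.A.Bs (i - 1)}"
      then have "th (i - 1) W \<in> {Y \<in> S.C.Hs (i - 1). S.dH (i - 1) Y = S.A.Bs (i - 1)}" using th_in by simp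
      moreover have "W = th' (i - 1) (th (i - 1) W)" using th'_th W by simp
      ultimately show "W \<in> th' (i - 1) ` {Y \<in> S.C.Hs (i - 1). S.dH (i - 1) Y = S.A.Bs (i - 1)}" by blast
    qed
  qed
qed

end
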